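(* Let $\mathfrak{X}=(X,\{R_i\}_{i=0}^{4})$ be a commutative association scheme with $R_3^\top=R_4$ and $R_i^\top=R_i$ for $0\le i\le 2$, with primitive idempotents $E_0,E_1,E_2,E_3,E_4$. Let its symmetrization $\tilde{\mathfrak X}=(X,\{R_0,R_1,R_2,R_3\cup R_4\})$ be amorphic, with primitive idempotents $\tilde E_0,\dots,\tilde E_3$ numbered so that, writing $\tilde A_i$ for the adjacency matrix of the $i$-th relation of $\tilde{\mathfrak X}$ and $k_i$ for its valency, $\tilde A_i\tilde E_0=k_i\tilde E_0$, $\tilde A_i\tilde E_i=b_i\tilde E_i$, $\tilde A_i\tilde E_j=a_i\tilde E_j$ for $1\le j\le 3$, $j\ne i$, with $a_i\ne b_i$. If $\tilde{E}_3\notin\{E_1,E_2,E_3,E_4\}$, then the digraph $(X,R_i\cup R_3)$ has $5$ distinct eigenvalues for each $i\in\{1,2\}$.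
   Context: Association scheme: finite set $X$ with a partition of $X\times X$ into relations $R_0$ (diagonal), $R_1,\dots$, closed under transposition, with constant intersection numbers; commutative if these are symmetric in the lower indices. Adjacency matrices are the $01$-matrices of the relations; primitive idempotents $E_0=J/|X|,\dots$ of the Bose–Mesner algebra satisfy $A_iE_j\in\mathbb C E_j$. A symmetric scheme is amorphic if merging the nondiagonal relations along any partition of their index set into nonempty parts gives an association scheme. Eigenvalues of a digraph $(X,R)$ are those of its $01$ adjacency matrix. *)

theory Defs
  imports "Jordan_Normal_Form.Char_Poly"
begin

definition assoc_scheme :: "nat \<Rightarrow> nat \<Rightarrow> (nat \<Rightarrow> (nat \<times> nat) set) \<Rightarrow> bool" where
  "assoc_scheme n d R \<longleftrightarrow>
     0 < n \<and>
     R 0 = {(x, x) | x. x < n} \<and>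
     (\<forall>i\<le>d. R i \<noteq> {} \<and> R i \<subseteq> {0..<n} \<times> {0..<n}) \<and>
     (\<forall>x<n. \<forall>y<n. \<exists>!i. i \<le> d \<and> (x, y) \<in> R i) \<and>
     (\<forall>i\<le>d. \<exists>j\<le>d. (R i)\<inverse> = R j) \<and>
     (\<forall>i\<le>d. \<forall>j\<le>d. \<forall>k\<le>d. \<exists>p::nat. \<forall>x y. (x, y) \<in> R k \<longrightarrow>
         card {z. z < n \<and> (x, z) \<in> R i \<and> (z, y) \<in> R j} = p)"

definition commutative_scheme :: "nat \<Rightarrow> nat \<Rightarrow> (nat \<Rightarrow> (nat \<times> nat) set) \<Rightarrow> bool" where
  "commutative_scheme n d R \<longleftrightarrow> assoc_scheme n d R \<and>
     (\<forall>i\<le>d. \<forall>j\<le>d. \<forall>x<n. \<forall>y<n.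
        card {z. z < n \<and> (x, z) \<in> R i \<and> (z, y) \<in> R j}
      = card {z. z < n \<and> (x, z) \<in> R j \<and> (z, y) \<in> R i})"

definition symmetric_scheme :: "nat \<Rightarrow> nat \<Rightarrow> (nat \<Rightarrow> (nat \<times> nat) set) \<Rightarrow> bool" where
  "symmetric_scheme n d R \<longleftrightarrow> assoc_scheme n d R \<and> (\<forall>i\<le>d. (R i)\<inverse> = R i)"

text \<open>Merging the nondiagonal relations along a partition of {1..d} into m nonempty parts,
  the partition being given by a surjection f from {1..d} onto {1..m}.\<close>

definition merge_rel :: "(nat \<Rightarrow> (nat \<times> nat) set) \<Rightarrow> nat \<Rightarrow> (nat \<Rightarrow> nat) \<Rightarrow> nat \<Rightarrow> (nat \<times> nat) set" where
  "merge_rel R d f l = (if l = 0 then R 0 else \<Union>{R i | i. 1 \<le> i \<and> i \<le> d \<and> f i = l})"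

definition amorphic :: "nat \<Rightarrow> nat \<Rightarrow> (nat \<Rightarrow> (nat \<times> nat) set) \<Rightarrow> bool" where
  "amorphic n d R \<longleftrightarrow> symmetric_scheme n d R \<and>
     (\<forall>m f. f ` {1..d} = {1..m} \<longrightarrow> assoc_scheme n m (merge_rel R d f))"

definition adj_mat :: "nat \<Rightarrow> (nat \<times> nat) set \<Rightarrow> complex mat" where
  "adj_mat n S = mat n n (\<lambda>(x, y). if (x, y) \<in> S then 1 else 0)"

definition all_ones :: "nat \<Rightarrow> complex mat" where
  "all_ones n = mat n n (\<lambda>_. 1)"

definition valency :: "nat \<Rightarrow> (nat \<times> nat) set \<Rightarrow> nat" where
  "valency n S = card {y. y < n \<and> (0, y) \<in> S}"

definition bose_mesner :: "nat \<Rightarrow> nat \<Rightarrow> (nat \<Rightarrow> (nat \<times> nat) set) \<Rightarrow> complex mat set" where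
  "bose_mesner n d R = {M. \<exists>c :: nat \<Rightarrow> complex.
      M = mat n n (\<lambda>(x, y). \<Sum>i\<le>d. c i * (if (x, y) \<in> R i then 1 else 0))}"

definition primitive_idempotent :: "nat \<Rightarrow> nat \<Rightarrow> (nat \<Rightarrow> (nat \<times> nat) set) \<Rightarrow> complex mat \<Rightarrow> bool" where
  "primitive_idempotent n d R E \<longleftrightarrow>
     E \<in> bose_mesner n d R \<and> E * E = E \<and> E \<noteq> 0\<^sub>m n n \<and>
     (\<forall>F \<in> bose_mesner n d R. F * F = F \<and> E * F = F \<longrightarrow> F = 0\<^sub>m n n \<or> F = E)"

definition prim_idempotents :: "nat \<Rightarrow> nat \<Rightarrow> (nat \<Rightarrow> (nat \<times> nat) set) \<Rightarrow> (nat \<Rightarrow> complex mat) \<Rightarrow> bool" where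
  "prim_idempotents n d R E \<longleftrightarrow>
     E 0 = (1 / of_nat n) \<cdot>\<^sub>m all_ones n \<and>
     inj_on E {0..d} \<and>
     (\<forall>j\<le>d. primitive_idempotent n d R (E j)) \<and>
     (\<forall>F. primitive_idempotent n d R F \<longrightarrow> (\<exists>j\<le>d. F = E j))"

definition symmetrization :: "(nat \<Rightarrow> (nat \<times> nat) set) \<Rightarrow> nat \<Rightarrow> (nat \<times> nat) set" where
  "symmetrization R l = (if l = 3 then R 3 \<union> R 4 else R l)"

end

theory Submission
  imports Defs
begin

lemma mult_entry:
  assumes "A \<in> carrier_mat n n" "B \<in> carrier_mat n n" "x < n" "y < n"
  shows "(A * B) $$ (x, y) = (\<Sum>z<n. A $$ (x, z) * B $$ (z, y))"
  using assms by (simp add: scalar_prod_def lessThan_atLeast0)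

lemma mat_eqI_n:
  assumes "A \<in> carrier_mat n n" "B \<in> carrier_mat n n"
    and "\<And>x y. x < n \<Longrightarrow> y < n \<Longrightarrow> A $$ (x, y) = B $$ (x, y)"
  shows "A = B"
  using assms by (intro eq_matI) auto

lemma nonzero_entry:
  assumes "A \<in> carrier_mat n n" "A \<noteq> 0\<^sub>m n n"
  shows "\<exists>x<n. \<exists>y<n. A $$ (x, y) \<noteq> 0"
proof (rule ccontr)
  assume "\<not> ?thesis"
  hence "A = 0\<^sub>m n n" using assms(1) by (intro mat_eqI_n) auto
  with assms(2) show False by simp
qed

lemma adj_carrier[simp]: "adj_mat n S \<in> carrier_mat n n"
  by (simp add: adj_mat_def)

lemma adj_entry[simp]: "x < n \<Longrightarrow> y < n \<Longrightarrow> adj_mat n S $$ (x, y) = (if (x, y) \<in> S then 1 else 0)"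
  by (simp add: adj_mat_def)

lemma ind_sum_card:
  "(\<Sum>y<n. (if P y then 1 else 0) :: complex) = of_nat (card {y. y < (n::nat) \<and> P y})"
proof -
  have "(\<Sum>y<n. (if P y then 1 else 0) :: complex) = (\<Sum>y\<in>{y. y < n \<and> P y}. 1)"
    by (rule sum.mono_neutral_cong_right) auto
  thus ?thesis by simp
qed

lemma ind_prod_card:
  "(\<Sum>y<n. (if (x, y) \<in> S then 1 else 0) * (if (y, z) \<in> T then 1 else 0) :: complex)
   = of_nat (card {y. y < (n::nat) \<and> (x, y) \<in> S \<and> (y, z) \<in> T})"
proof -
  have "(\<Sum>y<n. (if (x, y) \<in> S then 1 else 0) * (if (y, z) \<in> T then 1 else 0) :: complex)
     = (\<Sum>y<n. (if (x, y) \<in> S \<and> (y, z) \<in> T then 1 else 0))"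
    by (rule sum.cong) auto
  thus ?thesis using ind_sum_card[of "\<lambda>y. (x, y) \<in> S \<and> (y, z) \<in> T" n] by simp
qed

lemma eigenvalue_from_mat:
  assumes M: "M \<in> carrier_mat n n" and F: "F \<in> carrier_mat n n" and nz: "F \<noteq> 0\<^sub>m n n"
    and MF: "M * F = c \<cdot>\<^sub>m F"
  shows "eigenvalue M c"
proof -
  obtain x y where xy: "x < n" "y < n" "F $$ (x, y) \<noteq> 0" using nonzero_entry[OF F nz] by auto
  let ?v = "col F y"
  have v: "?v \<in> carrier_vec n" using F by auto
  have vnz: "?v \<noteq> 0\<^sub>v n"
  proof
    assume "?v = 0\<^sub>v n"
    hence "?v $ x = 0" using xy by simp
    thus False using xy F by simp
  qed
  have "M *\<^sub>v ?v = c \<cdot>\<^sub>v ?v"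
  proof
    show "dim_vec (M *\<^sub>v ?v) = dim_vec (c \<cdot>\<^sub>v ?v)" using M F by simp
    fix i assume i: "i < dim_vec (c \<cdot>\<^sub>v ?v)"
    hence i': "i < n" using F by simp
    have "(M *\<^sub>v ?v) $ i = (M * F) $$ (i, y)" using M F i' xy by simp
    also have "\<dots> = c * F $$ (i, y)" using MF F i' xy by simp
    finally show "(M *\<^sub>v ?v) $ i = (c \<cdot>\<^sub>v ?v) $ i" using i' xy F by simp
  qed
  thus ?thesis unfolding eigenvalue_def eigenvector_def using v vnz M by auto
qed

definition comm_counts :: "nat \<Rightarrow> nat \<Rightarrow> (nat \<Rightarrow> (nat \<times> nat) set) \<Rightarrow> bool" where
  "comm_counts n d R \<longleftrightarrow> (\<forall>i\<le>d. \<forall>j\<le>d. \<forall>x<n. \<forall>y<n.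
        card {z. z < n \<and> (x, z) \<in> R i \<and> (z, y) \<in> R j}
      = card {z. z < n \<and> (x, z) \<in> R j \<and> (z, y) \<in> R i})"

locale scheme =
  fixes n d :: nat and R :: "nat \<Rightarrow> (nat \<times> nat) set"
  assumes as: "assoc_scheme n d R" and cc: "comm_counts n d R"
begin

definition ind :: "nat \<Rightarrow> nat \<Rightarrow> nat \<Rightarrow> complex" where
  "ind k x y = (if (x, y) \<in> R k then 1 else 0)"

abbreviation BM where "BM \<equiv> bose_mesner n d R"

definition NN :: "nat \<Rightarrow> nat \<Rightarrow> nat \<Rightarrow> nat \<Rightarrow> complex" where
  "NN i j x z = of_nat (card {y. y < n \<and> (x, y) \<in> R i \<and> (y, z) \<in> R j})"

lemma asd1: "0 < n"
  using as unfolding assoc_scheme_def by (elim conjE) assumption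

lemma asd2: "R 0 = {(x, x) | x. x < n}"
  using as unfolding assoc_scheme_def by (elim conjE) assumption

lemma asd3: "\<forall>i\<le>d. R i \<noteq> {} \<and> R i \<subseteq> {0..<n} \<times> {0..<n}"
  using as unfolding assoc_scheme_def by (elim conjE) assumption

lemma asd4: "\<forall>x<n. \<forall>y<n. \<exists>!i. i \<le> d \<and> (x, y) \<in> R i"
  using as unfolding assoc_scheme_def by (elim conjE) assumption

lemma asd5: "\<forall>i\<le>d. \<exists>j\<le>d. (R i)\<inverse> = R j"
  using as unfolding assoc_scheme_def by (elim conjE) assumption

lemma asd6: "\<forall>i\<le>d. \<forall>j\<le>d. \<forall>k\<le>d. \<exists>p::nat. \<forall>x y. (x, y) \<in> R k \<longrightarrow>
         card {z. z < n \<and> (x, z) \<in> R i \<and> (z, y) \<in> R j} = p"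
  using as unfolding assoc_scheme_def by (elim conjE) assumption

lemma npos: "0 < n" by (rule asd1)

lemma unique_rel: "x < n \<Longrightarrow> y < n \<Longrightarrow> \<exists>!i. i \<le> d \<and> (x, y) \<in> R i"
  using asd4 by blast

lemma rel_sub: "i \<le> d \<Longrightarrow> (x, y) \<in> R i \<Longrightarrow> x < n \<and> y < n"
proof -
  assume "i \<le> d" "(x, y) \<in> R i"
  with asd3 have "(x, y) \<in> {0..<n} \<times> {0..<n}" by blast
  thus ?thesis by simp
qed

lemma rel_ne: "i \<le> d \<Longrightarrow> R i \<noteq> {}"
  using asd3 by blast

lemma R0: "R 0 = {(x, x) | x. x < n}" by (rule asd2)

lemma inter_num: "i \<le> d \<Longrightarrow> j \<le> d \<Longrightarrow> k \<le> d \<Longrightarrow> \<exists>p::nat. \<forall>x y. (x, y) \<in> R k \<longrightarrow>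
         card {z. z < n \<and> (x, z) \<in> R i \<and> (z, y) \<in> R j} = p"
  using asd6 by blast

lemma ind_single:
  assumes "x < n" "y < n" "(x, y) \<in> R k" "k \<le> d"
  shows "(\<Sum>i\<le>d. c i * ind i x y) = c k"
proof -
  have "\<And>i. i \<in> {..d} \<Longrightarrow> c i * ind i x y = (if i = k then c k else 0)"
    using unique_rel[OF assms(1,2)] assms(3,4) by (auto simp: ind_def)
  hence "(\<Sum>i\<le>d. c i * ind i x y) = (\<Sum>i\<le>d. (if i = k then c k else 0))"
    by (rule sum.cong[OF refl])
  also have "\<dots> = c k" using assms(4) by simp
  finally show ?thesis .
qed

lemma BM_carrier: "X \<in> BM \<Longrightarrow> X \<in> carrier_mat n n"
  by (auto simp: bose_mesner_def)

lemma BM_entry: "X \<in> BM \<Longrightarrow> \<exists>c. \<forall>x<n. \<forall>y<n. X $$ (x, y) = (\<Sum>i\<le>d. c i * ind i x y)"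
  by (auto simp: bose_mesner_def ind_def)

lemma BM_intro:
  assumes "X \<in> carrier_mat n n" "\<And>x y. x < n \<Longrightarrow> y < n \<Longrightarrow> X $$ (x, y) = (\<Sum>i\<le>d. c i * ind i x y)"
  shows "X \<in> BM"
proof -
  have "X = mat n n (\<lambda>(x, y). \<Sum>i\<le>d. c i * (if (x, y) \<in> R i then 1 else 0))"
    using assms by (intro mat_eqI_n) (auto simp: ind_def)
  thus ?thesis unfolding bose_mesner_def mem_Collect_eq by (rule exI[of _ c])
qed

lemma prod_entry:
  assumes X: "X \<in> carrier_mat n n" and Y: "Y \<in> carrier_mat n n"
    and cX: "\<forall>x<n. \<forall>y<n. X $$ (x, y) = (\<Sum>i\<le>d. c i * ind i x y)"
    and eY: "\<forall>x<n. \<forall>y<n. Y $$ (x, y) = (\<Sum>i\<le>d. e i * ind i x y)"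
    and xz: "x < n" "z < n"
  shows "(X * Y) $$ (x, z) = (\<Sum>i\<le>d. \<Sum>j\<le>d. c i * e j * NN i j x z)"
proof -
  have "(X * Y) $$ (x, z) = (\<Sum>y<n. X $$ (x, y) * Y $$ (y, z))"
    using mult_entry[OF X Y xz] .
  also have "\<dots> = (\<Sum>y<n. (\<Sum>i\<le>d. c i * ind i x y) * (\<Sum>j\<le>d. e j * ind j y z))"
    using cX eY xz by (intro sum.cong) auto
  also have "\<dots> = (\<Sum>y<n. \<Sum>i\<le>d. \<Sum>j\<le>d. (c i * e j) * (ind i x y * ind j y z))"
    by (simp add: sum_product algebra_simps)
  also have "\<dots> = (\<Sum>i\<le>d. \<Sum>y<n. \<Sum>j\<le>d. (c i * e j) * (ind i x y * ind j y z))"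
    by (rule sum.swap)
  also have "\<dots> = (\<Sum>i\<le>d. \<Sum>j\<le>d. \<Sum>y<n. (c i * e j) * (ind i x y * ind j y z))"
    by (rule sum.cong[OF refl], rule sum.swap)
  also have "\<dots> = (\<Sum>i\<le>d. \<Sum>j\<le>d. (c i * e j) * (\<Sum>y<n. ind i x y * ind j y z))"
    by (simp add: sum_distrib_left)
  also have "\<dots> = (\<Sum>i\<le>d. \<Sum>j\<le>d. c i * e j * NN i j x z)"
    unfolding NN_def ind_def ind_prod_card by simp
  finally show ?thesis .
qed

lemma NN_comm: "i \<le> d \<Longrightarrow> j \<le> d \<Longrightarrow> x < n \<Longrightarrow> z < n \<Longrightarrow> NN i j x z = NN j i x z"
  using cc unfolding comm_counts_def NN_def by simp

lemma BM_comm: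
  assumes "X \<in> BM" "Y \<in> BM"
  shows "X * Y = Y * X"
proof -
  obtain c where c: "\<forall>x<n. \<forall>y<n. X $$ (x, y) = (\<Sum>i\<le>d. c i * ind i x y)" using BM_entry[OF assms(1)] by blast
  obtain e where e: "\<forall>x<n. \<forall>y<n. Y $$ (x, y) = (\<Sum>i\<le>d. e i * ind i x y)" using BM_entry[OF assms(2)] by blast
  have X: "X \<in> carrier_mat n n" and Y: "Y \<in> carrier_mat n n" using assms BM_carrier by auto
  show ?thesis
  proof (rule mat_eqI_n)
    show "X * Y \<in> carrier_mat n n" "Y * X \<in> carrier_mat n n" using X Y by auto
    fix x z assume xz: "x < n" "z < n"
    have "(X * Y) $$ (x, z) = (\<Sum>i\<le>d. \<Sum>j\<le>d. c i * e j * NN i j x z)"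
      by (rule prod_entry[OF X Y c e xz])
    also have "\<dots> = (\<Sum>i\<le>d. \<Sum>j\<le>d. e j * c i * NN j i x z)"
      by (rule sum.cong[OF refl], rule sum.cong[OF refl]) (simp add: NN_comm xz mult.commute)
    also have "\<dots> = (\<Sum>j\<le>d. \<Sum>i\<le>d. e j * c i * NN j i x z)"
      by (rule sum.swap)
    also have "\<dots> = (Y * X) $$ (x, z)"
      by (rule prod_entry[OF Y X e c xz, symmetric])
    finally show "(X * Y) $$ (x, z) = (Y * X) $$ (x, z)" .
  qed
qed

lemma BM_mult:
  assumes "X \<in> BM" "Y \<in> BM"
  shows "X * Y \<in> BM"
proof -
  obtain c where c: "\<forall>x<n. \<forall>y<n. X $$ (x, y) = (\<Sum>i\<le>d. c i * ind i x y)" using BM_entry[OF assms(1)] by blast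
  obtain e where e: "\<forall>x<n. \<forall>y<n. Y $$ (x, y) = (\<Sum>i\<le>d. e i * ind i x y)" using BM_entry[OF assms(2)] by blast
  have X: "X \<in> carrier_mat n n" and Y: "Y \<in> carrier_mat n n" using assms BM_carrier by auto
  define p where "p i j k = (SOME p::nat. \<forall>x y. (x, y) \<in> R k \<longrightarrow>
         card {z. z < n \<and> (x, z) \<in> R i \<and> (z, y) \<in> R j} = p)" for i j k
  have p: "card {z. z < n \<and> (x, z) \<in> R i \<and> (z, y) \<in> R j} = p i j k"
    if "i \<le> d" "j \<le> d" "k \<le> d" "(x, y) \<in> R k" for i j k x y
    using someI_ex[OF inter_num[OF that(1-3)]] that(4) unfolding p_def by blast
  define f where "f k = (\<Sum>i\<le>d. \<Sum>j\<le>d. c i * e j * of_nat (p i j k))" for k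
  show ?thesis
  proof (rule BM_intro[of _ f])
    show "X * Y \<in> carrier_mat n n" using X Y by auto
    fix x z assume xz: "x < n" "z < n"
    obtain k where k: "k \<le> d" "(x, z) \<in> R k" using unique_rel[OF xz] by blast
    have "(X * Y) $$ (x, z) = (\<Sum>i\<le>d. \<Sum>j\<le>d. c i * e j * NN i j x z)"
      by (rule prod_entry[OF X Y c e xz])
    also have "\<dots> = f k" unfolding f_def NN_def
      by (rule sum.cong[OF refl], rule sum.cong[OF refl]) (simp add: p k)
    also have "\<dots> = (\<Sum>i\<le>d. f i * ind i x z)" using ind_single[OF xz k(2) k(1)] by simp
    finally show "(X * Y) $$ (x, z) = (\<Sum>i\<le>d. f i * ind i x z)" .
  qed
qed

lemma sum_delta_mult: "(k::nat) \<le> d \<Longrightarrow> (\<Sum>i\<le>d. (if i = k then 1 else 0) * (f i :: complex)) = f k"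
proof -
  assume k: "k \<le> d"
  have "(\<Sum>i\<le>d. (if i = k then 1 else 0) * f i) = (\<Sum>i\<le>d. if i = k then f i else 0)"
    by (rule sum.cong) auto
  thus ?thesis using k by simp
qed

lemma BM_one: "1\<^sub>m n \<in> BM"
proof (rule BM_intro[of _ "\<lambda>i. if i = 0 then 1 else 0"])
  show "1\<^sub>m n \<in> carrier_mat n n" by simp
  fix x y assume xy: "x < n" "y < n"
  have "(\<Sum>i\<le>d. (if i = 0 then 1 else 0) * ind i x y) = ind 0 x y" by (rule sum_delta_mult) simp
  thus "1\<^sub>m n $$ (x, y) = (\<Sum>i\<le>d. (if i = 0 then 1 else 0) * ind i x y)"
    using xy by (simp add: ind_def R0)
qed

lemma BM_adj: "k \<le> d \<Longrightarrow> adj_mat n (R k) \<in> BM"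
proof (rule BM_intro[of _ "\<lambda>i. if i = k then 1 else 0"])
  fix x y assume xy: "x < n" "y < n" and k: "k \<le> d"
  have "(\<Sum>i\<le>d. (if i = k then 1 else 0) * ind i x y) = ind k x y" using k by (rule sum_delta_mult)
  thus "adj_mat n (R k) $$ (x, y) = (\<Sum>i\<le>d. (if i = k then 1 else 0) * ind i x y)"
    using xy by (simp add: ind_def)
qed simp

end

locale scheme_E = scheme +
  fixes E :: "nat \<Rightarrow> complex mat"
  assumes pe: "prim_idempotents n d R E"
begin

lemma E_prim: "j \<le> d \<Longrightarrow> primitive_idempotent n d R (E j)"
  using pe unfolding prim_idempotents_def by blast

lemma E_BM: "j \<le> d \<Longrightarrow> E j \<in> BM"
  using E_prim unfolding primitive_idempotent_def by blast

lemma E_idem: "j \<le> d \<Longrightarrow> E j * E j = E j"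
  using E_prim unfolding primitive_idempotent_def by blast

lemma E_nz: "j \<le> d \<Longrightarrow> E j \<noteq> 0\<^sub>m n n"
  using E_prim unfolding primitive_idempotent_def by blast

lemma E_carrier: "j \<le> d \<Longrightarrow> E j \<in> carrier_mat n n"
  using E_BM BM_carrier by blast

lemma E_min: "j \<le> d \<Longrightarrow> F \<in> BM \<Longrightarrow> F * F = F \<Longrightarrow> E j * F = F \<Longrightarrow> F = 0\<^sub>m n n \<or> F = E j"
  using E_prim unfolding primitive_idempotent_def by blast

lemma E_inj: "i \<le> d \<Longrightarrow> j \<le> d \<Longrightarrow> E i = E j \<Longrightarrow> i = j"
  using pe unfolding prim_idempotents_def inj_on_def by auto

lemma E0: "E 0 = (1 / of_nat n) \<cdot>\<^sub>m all_ones n"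
  using pe unfolding prim_idempotents_def by blast

lemma E_complete: "primitive_idempotent n d R F \<Longrightarrow> \<exists>j\<le>d. F = E j"
  using pe unfolding prim_idempotents_def by blast

lemma E_orth:
  assumes i: "i \<le> d" and j: "j \<le> d" and ij: "i \<noteq> j"
  shows "E i * E j = 0\<^sub>m n n"
proof (rule ccontr)
  assume nz: "E i * E j \<noteq> 0\<^sub>m n n"
  let ?F = "E i * E j"
  have Ei: "E i \<in> carrier_mat n n" and Ej: "E j \<in> carrier_mat n n" using E_carrier i j by auto
  have comm: "E j * E i = E i * E j" using BM_comm[OF E_BM[OF j] E_BM[OF i]] .
  have FBM: "?F \<in> BM" using BM_mult[OF E_BM[OF i] E_BM[OF j]] .
  have "?F * ?F = E i * (E j * E i) * E j" using Ei Ej by (simp add: assoc_mult_mat[of _ n n _ n _ n])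
  also have "\<dots> = E i * (E i * E j) * E j" using comm by simp
  also have "\<dots> = (E i * E i) * (E j * E j)" using Ei Ej by (simp add: assoc_mult_mat[of _ n n _ n _ n])
  also have "\<dots> = ?F" using E_idem i j by simp
  finally have idem: "?F * ?F = ?F" .
  have "E i * ?F = (E i * E i) * E j" using Ei Ej by (simp add: assoc_mult_mat[of _ n n _ n _ n])
  hence le_i: "E i * ?F = ?F" using E_idem i by simp
  have "E j * ?F = E j * (E j * E i)" using comm by simp
  also have "\<dots> = (E j * E j) * E i" using Ei Ej by (simp add: assoc_mult_mat[of _ n n _ n _ n])
  also have "\<dots> = ?F" using E_idem j comm by simp
  finally have le_j: "E j * ?F = ?F" .
  have "?F = E i" using E_min[OF i FBM idem le_i] nz by blast
  moreover have "?F = E j" using E_min[OF j FBM idem le_j] nz by blast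
  ultimately show False using E_inj[OF i j] ij by simp
qed

lemma EE_entry:
  assumes "i \<le> d" "j \<le> d" "x < n" "y < n"
  shows "(\<Sum>z<n. E j $$ (x, z) * E i $$ (z, y)) = (if j = i then E i $$ (x, y) else 0)"
proof -
  have "(\<Sum>z<n. E j $$ (x, z) * E i $$ (z, y)) = (E j * E i) $$ (x, y)"
    using mult_entry[OF E_carrier E_carrier] assms by simp
  also have "\<dots> = (if j = i then E i $$ (x, y) else 0)"
    using E_orth[of j i] E_idem[of i] assms by auto
  finally show ?thesis .
qed

lemma lincomb_mult:
  assumes X: "X \<in> carrier_mat n n"
    and a: "\<forall>x<n. \<forall>y<n. X $$ (x, y) = (\<Sum>j\<le>d. a j * E j $$ (x, y))"
    and i: "i \<le> d"
  shows "X * E i = a i \<cdot>\<^sub>m E i"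
proof (rule mat_eqI_n)
  show "X * E i \<in> carrier_mat n n" "a i \<cdot>\<^sub>m E i \<in> carrier_mat n n" using X E_carrier[OF i] by auto
  fix x y assume xy: "x < n" "y < n"
  have "(X * E i) $$ (x, y) = (\<Sum>z<n. X $$ (x, z) * E i $$ (z, y))"
    using mult_entry[OF X E_carrier[OF i] xy] .
  also have "\<dots> = (\<Sum>z<n. \<Sum>j\<le>d. a j * (E j $$ (x, z) * E i $$ (z, y)))"
    using a xy by (intro sum.cong refl) (simp add: sum_distrib_right mult.assoc)
  also have "\<dots> = (\<Sum>j\<le>d. a j * (\<Sum>z<n. E j $$ (x, z) * E i $$ (z, y)))"
    by (subst sum.swap) (simp add: sum_distrib_left)
  also have "\<dots> = (\<Sum>j\<le>d. a j * (if j = i then E i $$ (x, y) else 0))"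
    using EE_entry[OF i _ xy] by (intro sum.cong refl) simp
  also have "\<dots> = a i * E i $$ (x, y)" using i by (simp add: if_distrib cong: if_cong)
  finally show "(X * E i) $$ (x, y) = (a i \<cdot>\<^sub>m E i) $$ (x, y)"
    using xy E_carrier[OF i] by simp
qed

end

context scheme_E begin

lemma lin_indep:
  assumes w: "\<forall>x<n. \<forall>y<n. (\<Sum>j\<le>d. w j * E j $$ (x, y)) = 0" and i: "i \<le> d"
  shows "w i = 0"
proof -
  have "0\<^sub>m n n * E i = w i \<cdot>\<^sub>m E i"
    by (rule lincomb_mult[OF _ _ i]) (use w in auto)
  hence "w i \<cdot>\<^sub>m E i = 0\<^sub>m n n" using E_carrier[OF i] by simp
  moreover obtain x y where xy: "x < n" "y < n" "E i $$ (x, y) \<noteq> 0"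
    using nonzero_entry[OF E_carrier[OF i] E_nz[OF i]] by blast
  ultimately have "w i * E i $$ (x, y) = 0"
    by (metis E_carrier i index_smult_mat(1) index_zero_mat(1) carrier_matD)
  thus ?thesis using xy by simp
qed

lemma E_span:
  assumes X: "X \<in> BM"
  shows "\<exists>a. \<forall>x<n. \<forall>y<n. X $$ (x, y) = (\<Sum>j\<le>d. a j * E j $$ (x, y))"
proof -
  have "\<forall>j. \<exists>c. j \<le> d \<longrightarrow> (\<forall>x<n. \<forall>y<n. E j $$ (x, y) = (\<Sum>k\<le>d. c k * ind k x y))"
    using BM_entry[OF E_BM] by blast
  then obtain C where C: "\<And>j x y. j \<le> d \<Longrightarrow> x < n \<Longrightarrow> y < n \<Longrightarrow>
      E j $$ (x, y) = (\<Sum>k\<le>d. C j k * ind k x y)"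
    by metis
  define Cm where "Cm = mat (Suc d) (Suc d) (\<lambda>(j, k). C j k)"
  have Cm: "Cm \<in> carrier_mat (Suc d) (Suc d)" unfolding Cm_def by simp
  have CmT: "transpose_mat Cm \<in> carrier_mat (Suc d) (Suc d)" using Cm by simp
  have "det (transpose_mat Cm) \<noteq> 0"
  proof
    assume "det (transpose_mat Cm) = 0"
    then obtain v where v: "v \<in> carrier_vec (Suc d)" "v \<noteq> 0\<^sub>v (Suc d)" "transpose_mat Cm *\<^sub>v v = 0\<^sub>v (Suc d)"
      using det_0_iff_vec_prod_zero[OF CmT] by blast
    have colzero: "(\<Sum>j\<le>d. v $ j * C j k) = 0" if k: "k \<le> d" for k
    proof -
      have "(transpose_mat Cm *\<^sub>v v) $ k = 0" using v(3) k by simp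
      moreover have "(transpose_mat Cm *\<^sub>v v) $ k = (\<Sum>j<Suc d. C j k * v $ j)"
        using k v(1) Cm by (simp add: Cm_def scalar_prod_def lessThan_atLeast0)
      ultimately show ?thesis by (simp add: lessThan_Suc_atMost mult.commute)
    qed
    have "\<forall>x<n. \<forall>y<n. (\<Sum>j\<le>d. v $ j * E j $$ (x, y)) = 0"
    proof (intro allI impI)
      fix x y assume xy: "x < n" "y < n"
      have "(\<Sum>j\<le>d. v $ j * E j $$ (x, y)) = (\<Sum>j\<le>d. \<Sum>k\<le>d. v $ j * C j k * ind k x y)"
        using C xy by (simp add: sum_distrib_left mult.assoc)
      also have "\<dots> = (\<Sum>k\<le>d. (\<Sum>j\<le>d. v $ j * C j k) * ind k x y)"
        by (subst sum.swap) (simp add: sum_distrib_right)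
      also have "\<dots> = 0" using colzero by simp
      finally show "(\<Sum>j\<le>d. v $ j * E j $$ (x, y)) = 0" .
    qed
    hence "\<forall>j\<le>d. v $ j = 0" using lin_indep by blast
    hence "v = 0\<^sub>v (Suc d)" using v(1) by (intro eq_vecI) auto
    thus False using v(2) by simp
  qed
  hence "det Cm \<noteq> 0" using Cm by (simp add: det_transpose)
  from det_non_zero_imp_unit[OF Cm this, unfolded Units_def ring_mat_def, of "()"]
  obtain D where D: "D \<in> carrier_mat (Suc d) (Suc d)" "D * Cm = 1\<^sub>m (Suc d)"
    by auto
  have ind_exp: "ind k x y = (\<Sum>j\<le>d. D $$ (k, j) * E j $$ (x, y))"
    if k: "k \<le> d" and xy: "x < n" "y < n" for k x y
  proof -
    have "(\<Sum>j\<le>d. D $$ (k, j) * E j $$ (x, y)) = (\<Sum>j\<le>d. \<Sum>l\<le>d. D $$ (k, j) * C j l * ind l x y)"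
      using C xy by (simp add: sum_distrib_left mult.assoc)
    also have "\<dots> = (\<Sum>l\<le>d. (\<Sum>j\<le>d. D $$ (k, j) * C j l) * ind l x y)"
      by (subst sum.swap) (simp add: sum_distrib_right)
    also have "\<dots> = (\<Sum>l\<le>d. (if k = l then 1 else 0) * ind l x y)"
    proof (rule sum.cong[OF refl])
      fix l assume l: "l \<in> {..d}"
      have "(D * Cm) $$ (k, l) = (\<Sum>j<Suc d. D $$ (k, j) * Cm $$ (j, l))"
        using mult_entry[OF D(1) Cm] k l by simp
      also have "\<dots> = (\<Sum>j\<le>d. D $$ (k, j) * C j l)"
        using l by (simp add: lessThan_Suc_atMost Cm_def)
      finally have "(\<Sum>j\<le>d. D $$ (k, j) * C j l) = (if k = l then 1 else 0)"
        using D(2) k l by simp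
      thus "(\<Sum>j\<le>d. D $$ (k, j) * C j l) * ind l x y = (if k = l then 1 else 0) * ind l x y" by simp
    qed
    also have "\<dots> = ind k x y"
    proof -
      have "(\<Sum>l\<le>d. (if k = l then 1 else 0) * ind l x y) = (\<Sum>l\<le>d. (if l = k then 1 else 0) * ind l x y)"
        by (intro sum.cong refl) auto
      thus ?thesis using sum_delta_mult[OF k] by simp
    qed
    finally show ?thesis by simp
  qed
  obtain c where c: "\<forall>x<n. \<forall>y<n. X $$ (x, y) = (\<Sum>k\<le>d. c k * ind k x y)" using BM_entry[OF X] by blast
  show ?thesis
  proof (intro exI allI impI)
    fix x y assume xy: "x < n" "y < n"
    have "X $$ (x, y) = (\<Sum>k\<le>d. c k * (\<Sum>j\<le>d. D $$ (k, j) * E j $$ (x, y)))"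
      using c xy ind_exp by simp
    also have "\<dots> = (\<Sum>j\<le>d. (\<Sum>k\<le>d. c k * D $$ (k, j)) * E j $$ (x, y))"
      by (simp add: sum_distrib_left sum_distrib_right mult.assoc) (rule sum.swap)
    finally show "X $$ (x, y) = (\<Sum>j\<le>d. (\<Sum>k\<le>d. c k * D $$ (k, j)) * E j $$ (x, y))" .
  qed
qed

lemma E_eig:
  assumes "X \<in> BM" "i \<le> d"
  shows "\<exists>c. X * E i = c \<cdot>\<^sub>m E i"
  using E_span[OF assms(1)] lincomb_mult[OF BM_carrier[OF assms(1)] _ assms(2)] by blast

lemma E_sum:
  assumes xy: "x < n" "y < n"
  shows "(\<Sum>j\<le>d. E j $$ (x, y)) = (if x = y then 1 else 0)"
proof -
  obtain a where a: "\<forall>x<n. \<forall>y<n. 1\<^sub>m n $$ (x, y) = (\<Sum>j\<le>d. a j * E j $$ (x, y))"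
    using E_span[OF BM_one] by blast
  have "a j = 1" if j: "j \<le> d" for j
  proof -
    have "1\<^sub>m n * E j = a j \<cdot>\<^sub>m E j" by (rule lincomb_mult[OF _ a j]) simp
    hence "E j = a j \<cdot>\<^sub>m E j" using E_carrier[OF j] by simp
    moreover obtain u v where uv: "u < n" "v < n" "E j $$ (u, v) \<noteq> 0"
      using nonzero_entry[OF E_carrier[OF j] E_nz[OF j]] by blast
    ultimately have "E j $$ (u, v) = a j * E j $$ (u, v)"
      by (metis E_carrier j index_smult_mat(1) carrier_matD)
    thus ?thesis using uv by simp
  qed
  thus ?thesis using a xy by simp
qed

end

lemma mult_apply:
  assumes "A \<in> carrier_mat n n" "B \<in> carrier_mat n n" "x < n"
  shows "(\<Sum>z<n. (A * B) $$ (x, z) * v z) = (\<Sum>y<n. A $$ (x, y) * (\<Sum>z<n. B $$ (y, z) * v z))"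
proof -
  have "(\<Sum>z<n. (A * B) $$ (x, z) * v z) = (\<Sum>z<n. \<Sum>y<n. A $$ (x, y) * B $$ (y, z) * v z)"
    using assms by (intro sum.cong refl) (simp add: mult_entry[OF assms(1,2) assms(3)] sum_distrib_right del: index_mult_mat)
  also have "\<dots> = (\<Sum>y<n. A $$ (x, y) * (\<Sum>z<n. B $$ (y, z) * v z))"
    by (subst sum.swap) (simp add: sum_distrib_left mult.assoc)
  finally show ?thesis .
qed

lemma eigenvalue_entry:
  assumes M: "M \<in> carrier_mat n n" and ev: "eigenvalue M mu"
  shows "\<exists>v. (\<exists>x<n. v x \<noteq> 0) \<and> (\<forall>x<n. (\<Sum>z<n. M $$ (x, z) * v z) = mu * v x)"
proof -
  obtain v where v: "v \<in> carrier_vec n" "v \<noteq> 0\<^sub>v n" "M *\<^sub>v v = mu \<cdot>\<^sub>v v"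
    using ev M unfolding eigenvalue_def eigenvector_def by auto
  have "\<exists>x<n. v $ x \<noteq> 0"
  proof (rule ccontr)
    assume "\<not> ?thesis"
    hence "v = 0\<^sub>v n" using v(1) by (intro eq_vecI) auto
    thus False using v(2) by simp
  qed
  moreover have "\<forall>x<n. (\<Sum>z<n. M $$ (x, z) * v $ z) = mu * v $ x"
  proof (intro allI impI)
    fix x assume x: "x < n"
    have "(M *\<^sub>v v) $ x = (\<Sum>z<n. M $$ (x, z) * v $ z)"
      using M v(1) x by (simp add: scalar_prod_def lessThan_atLeast0)
    thus "(\<Sum>z<n. M $$ (x, z) * v $ z) = mu * v $ x" using v(3) x v(1) by simp
  qed
  ultimately show ?thesis by blast
qed

lemma eig_in_set:
  fixes E :: "nat \<Rightarrow> complex mat"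
  assumes M: "M \<in> carrier_mat n n" and ev: "eigenvalue M mu"
    and Ec: "\<And>j. j \<le> d \<Longrightarrow> E j \<in> carrier_mat n n"
    and Es: "\<And>x y. x < n \<Longrightarrow> y < n \<Longrightarrow> (\<Sum>j\<le>d. E j $$ (x, y)) = (if x = y then 1 else 0)"
    and ME: "\<And>j. j \<le> d \<Longrightarrow> M * E j = lam j \<cdot>\<^sub>m E j"
    and EM: "\<And>j. j \<le> d \<Longrightarrow> E j * M = M * E j"
  shows "\<exists>j\<le>d. mu = lam j"
proof -
  obtain v where v: "\<exists>x<n. v x \<noteq> 0" "\<forall>x<n. (\<Sum>z<n. M $$ (x, z) * v z) = mu * v x"
    using eigenvalue_entry[OF M ev] by blast
  define w where "w j x = (\<Sum>z<n. E j $$ (x, z) * v z)" for j x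
  have sw: "(\<Sum>j\<le>d. w j x) = v x" if x: "x < n" for x
  proof -
    have "(\<Sum>j\<le>d. w j x) = (\<Sum>z<n. (\<Sum>j\<le>d. E j $$ (x, z)) * v z)"
      unfolding w_def by (subst sum.swap) (simp add: sum_distrib_right)
    also have "\<dots> = (\<Sum>z<n. (if z = x then v x else 0))"
      using Es x by (intro sum.cong refl) auto
    also have "\<dots> = v x" using x by simp
    finally show ?thesis .
  qed
  obtain j x where jx: "j \<le> d" "x < n" "w j x \<noteq> 0"
  proof -
    obtain x where x: "x < n" "v x \<noteq> 0" using v(1) by blast
    hence "(\<Sum>j\<le>d. w j x) \<noteq> 0" using sw by simp
    then obtain j where "j \<le> d" "w j x \<noteq> 0" by (meson atMost_iff sum.neutral)
    thus ?thesis using that x by blast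
  qed
  have "(\<Sum>z<n. (M * E j) $$ (x, z) * v z) = lam j * w j x"
    using ME[OF jx(1)] jx Ec[OF jx(1)] unfolding w_def by (simp add: sum_distrib_left mult.assoc)
  moreover have "(\<Sum>z<n. (E j * M) $$ (x, z) * v z) = mu * w j x"
  proof -
    have "(\<Sum>z<n. (E j * M) $$ (x, z) * v z) = (\<Sum>y<n. E j $$ (x, y) * (\<Sum>z<n. M $$ (y, z) * v z))"
      by (rule mult_apply[OF Ec[OF jx(1)] M jx(2)])
    also have "\<dots> = (\<Sum>y<n. E j $$ (x, y) * (mu * v y))"
      using v(2) by (intro sum.cong refl) simp
    also have "\<dots> = mu * w j x" unfolding w_def by (simp add: sum_distrib_left mult_ac)
    finally show ?thesis .
  qed
  ultimately have "lam j * w j x = mu * w j x" using EM[OF jx(1)] by simp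
  thus ?thesis using jx by auto
qed

lemma real_eig:
  fixes A :: "nat \<Rightarrow> nat \<Rightarrow> complex"
  assumes Ar: "\<And>x z. cnj (A x z) = A x z"
    and Av: "\<And>x. x < n \<Longrightarrow> (\<Sum>z<n. A x z * v z) = al * v x"
    and ATv: "\<And>x. x < n \<Longrightarrow> (\<Sum>z<n. A z x * v z) = be * v x"
    and nz: "\<exists>x<n. v x \<noteq> 0"
  shows "al = cnj be"
proof -
  define S where "S = (\<Sum>x<n. cnj (v x) * v x)"
  have S_real: "S = of_real (\<Sum>x<n. (cmod (v x))\<^sup>2)"
  proof -
    have "\<And>x. cnj (v x) * v x = of_real ((cmod (v x))\<^sup>2)"
      by (metis complex_norm_square mult.commute)
    thus ?thesis unfolding S_def by simp
  qed
  have "(\<Sum>x<n. (cmod (v x))\<^sup>2) > 0"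
  proof -
    obtain x where x: "x < n" "v x \<noteq> 0" using nz by blast
    have "(cmod (v x))\<^sup>2 \<le> (\<Sum>x<n. (cmod (v x))\<^sup>2)"
      using x by (intro member_le_sum) auto
    moreover have "(cmod (v x))\<^sup>2 > 0" using x by simp
    ultimately show ?thesis by linarith
  qed
  hence Snz: "S \<noteq> 0" using S_real by (metis of_real_eq_0_iff less_irrefl)
  have "(\<Sum>x<n. cnj (v x) * (\<Sum>z<n. A x z * v z)) = al * S"
    unfolding S_def using Av by (simp add: sum_distrib_left mult_ac)
  moreover have "(\<Sum>z<n. cnj (\<Sum>x<n. A x z * v x) * v z) = cnj be * S"
    unfolding S_def using ATv by (simp add: sum_distrib_left mult_ac)
  moreover have "(\<Sum>x<n. cnj (v x) * (\<Sum>z<n. A x z * v z)) = (\<Sum>z<n. cnj (\<Sum>x<n. A x z * v x) * v z)"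
  proof -
    have "(\<Sum>x<n. cnj (v x) * (\<Sum>z<n. A x z * v z)) = (\<Sum>x<n. \<Sum>z<n. cnj (v x) * A x z * v z)"
      by (simp add: sum_distrib_left mult.assoc)
    also have "\<dots> = (\<Sum>z<n. \<Sum>x<n. cnj (v x) * A x z * v z)" by (rule sum.swap)
    also have "\<dots> = (\<Sum>z<n. cnj (\<Sum>x<n. A x z * v x) * v z)"
      by (simp add: sum_distrib_right sum_distrib_left Ar mult_ac)
    finally show ?thesis .
  qed
  ultimately show ?thesis using Snz by simp
qed

lemma eig_bound:
  fixes A :: "nat \<Rightarrow> nat \<Rightarrow> complex"
  assumes A01: "\<And>x z. A x z = 0 \<or> A x z = 1"
    and rs: "\<And>x. x < n \<Longrightarrow> (\<Sum>z<n. A x z) = of_real K"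
    and Av: "\<And>x. x < n \<Longrightarrow> (\<Sum>z<n. A x z * v z) = th * v x"
    and nz: "\<exists>x<n. v x \<noteq> 0"
  shows "cmod th \<le> K"
proof -
  have n: "n > 0" using nz by auto
  define m where "m = Max ((\<lambda>z. cmod (v z)) ` {..<n})"
  have "m \<in> (\<lambda>z. cmod (v z)) ` {..<n}" unfolding m_def using n by (intro Max_in) auto
  then obtain x where x: "x < n" "cmod (v x) = m" by auto
  have mge: "cmod (v z) \<le> m" if "z < n" for z unfolding m_def using that by (intro Max_ge) auto
  have mpos: "m > 0"
  proof -
    obtain y where y: "y < n" "v y \<noteq> 0" using nz by blast
    have "0 < cmod (v y)" using y by simp
    also have "\<dots> \<le> m" using mge y by simp
    finally show ?thesis .
  qed
  have cA: "cmod (A x z) = Re (A x z)" for z using A01[of x z] by auto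
  have "cmod th * m = cmod (th * v x)" using x by (simp add: norm_mult)
  also have "\<dots> = cmod (\<Sum>z<n. A x z * v z)" using Av x by simp
  also have "\<dots> \<le> (\<Sum>z<n. cmod (A x z * v z))" by (rule norm_sum)
  also have "\<dots> \<le> (\<Sum>z<n. Re (A x z) * m)"
  proof (rule sum_mono)
    fix z assume z: "z \<in> {..<n}"
    have "cmod (A x z * v z) = Re (A x z) * cmod (v z)" by (simp add: norm_mult cA)
    also have "\<dots> \<le> Re (A x z) * m" using mge z A01[of x z] by (auto intro: mult_left_mono)
    finally show "cmod (A x z * v z) \<le> Re (A x z) * m" .
  qed
  also have "\<dots> = Re (\<Sum>z<n. A x z) * m" by (simp add: sum_distrib_right)
  also have "\<dots> = K * m" using rs x by simp
  finally show ?thesis using mpos by simp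
qed

lemma srg_trans:
  assumes Q: "assoc_scheme n 2 Q"
    and F0c: "F0 \<in> carrier_mat n n" and Fc: "F \<in> carrier_mat n n"
    and F0nz: "F0 \<noteq> 0\<^sub>m n n" and Fnz: "F \<noteq> 0\<^sub>m n n"
    and AF0: "adj_mat n (Q 1) * F0 = ka \<cdot>\<^sub>m F0"
    and AF: "adj_mat n (Q 1) * F = ka \<cdot>\<^sub>m F"
    and JF0: "all_ones n * F0 = of_nat n \<cdot>\<^sub>m F0"
    and JF: "all_ones n * F = 0\<^sub>m n n"
    and xy: "(x, y) \<in> Q 1" and yz: "(y, z) \<in> Q 1" and xz: "x \<noteq> z"
  shows "(x, z) \<in> Q 1"
proof (rule ccontr)
  assume nxz: "(x, z) \<notin> Q 1"
  have n: "0 < n"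
    using Q unfolding assoc_scheme_def by (elim conjE) assumption
  have Q0: "Q 0 = {(x, x) | x. x < n}"
    using Q unfolding assoc_scheme_def by (elim conjE) assumption
  have Qsub: "\<forall>i\<le>2. Q i \<noteq> {} \<and> Q i \<subseteq> {0..<n} \<times> {0..<n}"
    using Q unfolding assoc_scheme_def by (elim conjE) assumption
  have Qu: "\<forall>x<n. \<forall>y<n. \<exists>!i. i \<le> 2 \<and> (x, y) \<in> Q i"
    using Q unfolding assoc_scheme_def by (elim conjE) assumption
  have Qp: "\<forall>i\<le>2. \<forall>j\<le>2. \<forall>k\<le>2. \<exists>p::nat. \<forall>x y. (x, y) \<in> Q k \<longrightarrow>
         card {z. z < n \<and> (x, z) \<in> Q i \<and> (z, y) \<in> Q j} = p"
    using Q unfolding assoc_scheme_def by (elim conjE) assumption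
  have Q1sub: "u < n \<and> v < n" if "(u, v) \<in> Q 1" for u v
  proof -
    have "Q 1 \<subseteq> {0..<n} \<times> {0..<n}" using Qsub by (metis one_le_numeral)
    thus ?thesis using that by auto
  qed
  have "\<exists>p::nat. \<forall>u v. (u, v) \<in> Q 0 \<longrightarrow> card {z. z < n \<and> (u, z) \<in> Q 1 \<and> (z, v) \<in> Q 1} = p"
    using Qp[rule_format, of 1 1 0] by simp
  then obtain p0 where p0: "\<And>u v. (u, v) \<in> Q 0 \<Longrightarrow> card {z. z < n \<and> (u, z) \<in> Q 1 \<and> (z, v) \<in> Q 1} = p0"
    by blast
  have "\<exists>p::nat. \<forall>u v. (u, v) \<in> Q 1 \<longrightarrow> card {z. z < n \<and> (u, z) \<in> Q 1 \<and> (z, v) \<in> Q 1} = p"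
    using Qp[rule_format, of 1 1 1] by simp
  then obtain p1 where p1: "\<And>u v. (u, v) \<in> Q 1 \<Longrightarrow> card {z. z < n \<and> (u, z) \<in> Q 1 \<and> (z, v) \<in> Q 1} = p1"
    by blast
  have "\<exists>p::nat. \<forall>u v. (u, v) \<in> Q 2 \<longrightarrow> card {z. z < n \<and> (u, z) \<in> Q 1 \<and> (z, v) \<in> Q 1} = p"
    using Qp[rule_format, of 1 1 2] by simp
  then obtain p2 where p2: "\<And>u v. (u, v) \<in> Q 2 \<Longrightarrow> card {z. z < n \<and> (u, z) \<in> Q 1 \<and> (z, v) \<in> Q 1} = p2"
    by blast
  let ?A = "adj_mat n (Q 1)"
  let ?a = "\<lambda>u v. (if (u, v) \<in> Q 1 then 1 else 0) :: complex"
  have loop: "(u, u) \<notin> Q 1" if un: "u < n" for u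
  proof
    assume "(u, u) \<in> Q 1"
    moreover have "(u, u) \<in> Q 0" using Q0 un by auto
    moreover obtain i where "\<forall>j. j \<le> 2 \<and> (u, u) \<in> Q j \<longrightarrow> j = i"
      using Qu un unfolding Ex1_def by blast
    ultimately show False by (metis one_le_numeral zero_le zero_neq_one)
  qed
  have in2: "(u, v) \<in> Q 2" if uv: "u < n" "v < n" "u \<noteq> v" "(u, v) \<notin> Q 1" for u v
  proof -
    obtain i where i: "i \<le> 2" "(u, v) \<in> Q i" using Qu uv(1,2) by blast
    have "i \<noteq> 0"
    proof
      assume "i = 0"
      hence "(u, v) \<in> {(x, x) | x. x < n}" using i Q0 by simp
      thus False using uv(3) by auto
    qed
    moreover have "i \<noteq> 1" using i uv(4) by auto
    ultimately have "i = 2" using i(1) by linarith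
    thus ?thesis using i by simp
  qed
  have AA: "(\<Sum>y<n. ?a u y * ?a y v) =
      of_nat p0 * (if u = v then 1 else 0) + of_nat p1 * ?a u v + of_nat p2 * (1 - (if u = v then 1 else 0) - ?a u v)"
    if uv: "u < n" "v < n" for u v
  proof -
    have c: "(\<Sum>y<n. ?a u y * ?a y v) = of_nat (card {y. y < n \<and> (u, y) \<in> Q 1 \<and> (y, v) \<in> Q 1})"
      by (rule ind_prod_card)
    show ?thesis
    proof (cases "u = v")
      case True
      hence "(u, v) \<in> Q 0" using Q0 uv by auto
      thus ?thesis using c p0 True loop uv by simp
    next
      case False
      show ?thesis
      proof (cases "(u, v) \<in> Q 1")
        case True
        thus ?thesis using c p1 False by simp
      next
        case nQ: False
        thus ?thesis using c p2[OF in2[OF uv False nQ]] False by simp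
      qed
    qed
  qed
  have key: "ka\<^sup>2 * u r = (of_nat p0 + of_nat p1 * ka + of_nat p2 * (s - 1 - ka)) * u r"
    if Au: "\<And>y. y < n \<Longrightarrow> (\<Sum>z<n. ?a y z * u z) = ka * u y"
      and su: "\<And>y. y < n \<Longrightarrow> (\<Sum>z<n. u z) = s * u y" and r: "r < n" for u s r
  proof -
    have "(\<Sum>z<n. (?A * ?A) $$ (r, z) * u z) = (\<Sum>y<n. ?A $$ (r, y) * (\<Sum>z<n. ?A $$ (y, z) * u z))"
      by (rule mult_apply) (use r in auto)
    also have "\<dots> = (\<Sum>y<n. ?a r y * (ka * u y))"
      using r Au by (intro sum.cong refl) simp
    also have "\<dots> = ka * (\<Sum>y<n. ?a r y * u y)" by (simp add: sum_distrib_left mult_ac)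
    also have "\<dots> = ka\<^sup>2 * u r" using Au[OF r] by (simp add: power2_eq_square)
    finally have l: "(\<Sum>z<n. (?A * ?A) $$ (r, z) * u z) = ka\<^sup>2 * u r" .
    have "(\<Sum>z<n. (?A * ?A) $$ (r, z) * u z) = (\<Sum>z<n. (of_nat p0 * (if r = z then 1 else 0)
         + of_nat p1 * ?a r z + of_nat p2 * (1 - (if r = z then 1 else 0) - ?a r z)) * u z)"
    proof (rule sum.cong[OF refl])
      fix z assume z: "z \<in> {..<n}"
      have "(?A * ?A) $$ (r, z) = (\<Sum>y<n. ?A $$ (r, y) * ?A $$ (y, z))"
        using r z by (intro mult_entry) auto
      also have "\<dots> = (\<Sum>y<n. ?a r y * ?a y z)" using r z by (intro sum.cong refl) simp
      finally show "(?A * ?A) $$ (r, z) * u z = (of_nat p0 * (if r = z then 1 else 0)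
         + of_nat p1 * ?a r z + of_nat p2 * (1 - (if r = z then 1 else 0) - ?a r z)) * u z"
        using AA[of r z] r z by simp
    qed
    also have "\<dots> = (\<Sum>z<n. of_nat p0 * ((if r = z then 1 else 0) * u z) + of_nat p1 * (?a r z * u z)
        + of_nat p2 * u z - of_nat p2 * ((if r = z then 1 else 0) * u z) - of_nat p2 * (?a r z * u z))"
      by (intro sum.cong refl) (simp add: algebra_simps)
    also have "\<dots> = of_nat p0 * (\<Sum>z<n. (if r = z then 1 else 0) * u z) + of_nat p1 * (\<Sum>z<n. ?a r z * u z)
        + of_nat p2 * (\<Sum>z<n. u z) - of_nat p2 * (\<Sum>z<n. (if r = z then 1 else 0) * u z)
        - of_nat p2 * (\<Sum>z<n. ?a r z * u z)"
      by (simp only: sum.distrib sum_subtractf sum_distrib_left)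
    also have "\<dots> = of_nat p0 * u r + of_nat p1 * (\<Sum>z<n. ?a r z * u z)
        + of_nat p2 * ((\<Sum>z<n. u z) - u r - (\<Sum>z<n. ?a r z * u z))"
    proof -
      have "(\<Sum>z<n. (if r = z then 1 else 0) * u z) = (\<Sum>z<n. if r = z then u r else 0)"
        by (rule sum.cong) auto
      also have "\<dots> = u r" using r by simp
      finally show ?thesis by (simp add: algebra_simps)
    qed
    also have "\<dots> = (of_nat p0 + of_nat p1 * ka + of_nat p2 * (s - 1 - ka)) * u r"
      using Au[OF r] su[OF r] by (simp add: algebra_simps)
    finally show ?thesis using l by metis
  qed
  have colA: "(\<Sum>z<n. ?a y z * G $$ (z, c)) = kk * G $$ (y, c)"
    if "G \<in> carrier_mat n n" "?A * G = kk \<cdot>\<^sub>m G" "y < n" "c < n" for G kk y c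
  proof -
    have "(?A * G) $$ (y, c) = (\<Sum>z<n. ?A $$ (y, z) * G $$ (z, c))"
      using that by (intro mult_entry) auto
    also have "\<dots> = (\<Sum>z<n. ?a y z * G $$ (z, c))" using that by (intro sum.cong refl) simp
    finally show ?thesis using that by simp
  qed
  have colJ: "(\<Sum>z<n. G $$ (z, c)) = (all_ones n * G) $$ (y, c)"
    if "G \<in> carrier_mat n n" "y < n" "c < n" for G y c
  proof -
    have "(all_ones n * G) $$ (y, c) = (\<Sum>z<n. all_ones n $$ (y, z) * G $$ (z, c))"
      using that by (intro mult_entry) (auto simp: all_ones_def)
    thus ?thesis using that by (simp add: all_ones_def)
  qed
  obtain r0 c0 where rc0: "r0 < n" "c0 < n" "F0 $$ (r0, c0) \<noteq> 0"
    using nonzero_entry[OF F0c F0nz] by blast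
  obtain r1 c1 where rc1: "r1 < n" "c1 < n" "F $$ (r1, c1) \<noteq> 0"
    using nonzero_entry[OF Fc Fnz] by blast
  have e0: "ka\<^sup>2 * F0 $$ (r0, c0) = (of_nat p0 + of_nat p1 * ka + of_nat p2 * (of_nat n - 1 - ka)) * F0 $$ (r0, c0)"
  proof (rule key[where u = "\<lambda>z. F0 $$ (z, c0)"])
    show "\<And>y. y < n \<Longrightarrow> (\<Sum>z<n. ?a y z * F0 $$ (z, c0)) = ka * F0 $$ (y, c0)"
      using colA[OF F0c AF0] rc0 by blast
    show "\<And>y. y < n \<Longrightarrow> (\<Sum>z<n. F0 $$ (z, c0)) = of_nat n * F0 $$ (y, c0)"
      using colJ[OF F0c] JF0 rc0 F0c by simp
  qed (rule rc0(1))
  have e1: "ka\<^sup>2 * F $$ (r1, c1) = (of_nat p0 + of_nat p1 * ka + of_nat p2 * (0 - 1 - ka)) * F $$ (r1, c1)"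
  proof (rule key[where u = "\<lambda>z. F $$ (z, c1)"])
    show "\<And>y. y < n \<Longrightarrow> (\<Sum>z<n. ?a y z * F $$ (z, c1)) = ka * F $$ (y, c1)"
      using colA[OF Fc AF] rc1 by blast
    show "\<And>y. y < n \<Longrightarrow> (\<Sum>z<n. F $$ (z, c1)) = 0 * F $$ (y, c1)"
      using colJ[OF Fc] JF rc1 Fc by simp
  qed (rule rc1(1))
  from e0 rc0 have "ka\<^sup>2 = of_nat p0 + of_nat p1 * ka + of_nat p2 * (of_nat n - 1 - ka)" by simp
  moreover from e1 rc1 have "ka\<^sup>2 = of_nat p0 + of_nat p1 * ka + of_nat p2 * (0 - 1 - ka)" by simp
  ultimately have "of_nat p2 * (of_nat n :: complex) = 0" by (simp add: algebra_simps)
  hence "p2 = 0" using n by simp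
  have xn: "x < n" "y < n" "z < n" using Q1sub xy yz by auto
  have "card {w. w < n \<and> (x, w) \<in> Q 1 \<and> (w, z) \<in> Q 1} = 0"
    using p2[OF in2[OF xn(1,3) xz nxz]] \<open>p2 = 0\<close> by simp
  moreover have "finite {w. w < n \<and> (x, w) \<in> Q 1 \<and> (w, z) \<in> Q 1}" by simp
  moreover have "y \<in> {w. w < n \<and> (x, w) \<in> Q 1 \<and> (w, z) \<in> Q 1}" using xn xy yz by simp
  ultimately show False by (metis card_0_eq empty_iff)
qed

lemma sum4: "(\<Sum>i\<le>(4::nat). g i) = g 0 + g 1 + g 2 + g 3 + (g 4 :: 'a :: comm_monoid_add)"
  by (simp add: atMost_Suc eval_nat_numeral add_ac)

lemma sum3: "(\<Sum>i\<le>(3::nat). g i) = g 0 + g 1 + g 2 + (g 3 :: 'a :: comm_monoid_add)"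
  by (simp add: atMost_Suc eval_nat_numeral add_ac)

lemma sym_comm:
  assumes "symmetric_scheme n d R"
  shows "comm_counts n d R"
proof -
  have as: "assoc_scheme n d R" and sy: "\<forall>i\<le>d. (R i)\<inverse> = R i"
    using assms unfolding symmetric_scheme_def by auto
  have Qu: "\<forall>x<n. \<forall>y<n. \<exists>!i. i \<le> d \<and> (x, y) \<in> R i"
    using as unfolding assoc_scheme_def by (elim conjE) assumption
  have Qp: "\<forall>i\<le>d. \<forall>j\<le>d. \<forall>k\<le>d. \<exists>p::nat. \<forall>x y. (x, y) \<in> R k \<longrightarrow>
         card {z. z < n \<and> (x, z) \<in> R i \<and> (z, y) \<in> R j} = p"
    using as unfolding assoc_scheme_def by (elim conjE) assumption
  have symm: "(x, y) \<in> R i \<longleftrightarrow> (y, x) \<in> R i" if "i \<le> d" for i x y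
    using sy that by (metis converse_iff)
  show ?thesis unfolding comm_counts_def
  proof (intro allI impI)
    fix i j x y assume ij: "i \<le> d" "j \<le> d" and xy: "x < n" "y < n"
    obtain k where k: "k \<le> d" "(x, y) \<in> R k" using Qu xy by blast
    have k': "(y, x) \<in> R k" using symm k by blast
    obtain p where p: "\<forall>u v. (u, v) \<in> R k \<longrightarrow> card {z. z < n \<and> (u, z) \<in> R i \<and> (z, v) \<in> R j} = p"
      using Qp ij k by blast
    have "{z. z < n \<and> (x, z) \<in> R j \<and> (z, y) \<in> R i} = {z. z < n \<and> (y, z) \<in> R i \<and> (z, x) \<in> R j}"
      using symm ij by blast
    thus "card {z. z < n \<and> (x, z) \<in> R i \<and> (z, y) \<in> R j} = card {z. z < n \<and> (x, z) \<in> R j \<and> (z, y) \<in> R i}"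
      using p k k' by simp
  qed
qed

context scheme begin

lemma disj: "a \<le> d \<Longrightarrow> b \<le> d \<Longrightarrow> (x, y) \<in> R a \<Longrightarrow> (x, y) \<in> R b \<Longrightarrow> a = b"
  using unique_rel rel_sub by blast

lemma BM_add:
  assumes "X \<in> BM" "Y \<in> BM"
  shows "X + Y \<in> BM"
proof -
  obtain c where c: "\<forall>x<n. \<forall>y<n. X $$ (x, y) = (\<Sum>i\<le>d. c i * ind i x y)" using BM_entry[OF assms(1)] by blast
  obtain e where e: "\<forall>x<n. \<forall>y<n. Y $$ (x, y) = (\<Sum>i\<le>d. e i * ind i x y)" using BM_entry[OF assms(2)] by blast
  have X: "X \<in> carrier_mat n n" and Y: "Y \<in> carrier_mat n n" using assms BM_carrier by auto
  show ?thesis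
  proof (rule BM_intro[of _ "\<lambda>i. c i + e i"])
    show "X + Y \<in> carrier_mat n n" using X Y by simp
    fix x y assume "x < n" "y < n"
    thus "(X + Y) $$ (x, y) = (\<Sum>i\<le>d. (c i + e i) * ind i x y)"
      using c e X Y by (simp add: algebra_simps sum.distrib)
  qed
qed

end

context scheme_E begin

lemma sum_decomp:
  assumes X: "X \<in> carrier_mat n n" and xy: "x < n" "y < n"
  shows "X $$ (x, y) = (\<Sum>j\<le>d. (X * E j) $$ (x, y))"
proof -
  have "(\<Sum>j\<le>d. (X * E j) $$ (x, y)) = (\<Sum>j\<le>d. \<Sum>z<n. X $$ (x, z) * E j $$ (z, y))"
    using xy X E_carrier by (intro sum.cong refl) (simp add: mult_entry del: index_mult_mat)
  also have "\<dots> = (\<Sum>z<n. X $$ (x, z) * (\<Sum>j\<le>d. E j $$ (z, y)))"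
    by (subst sum.swap) (simp add: sum_distrib_left)
  also have "\<dots> = (\<Sum>z<n. if z = y then X $$ (x, y) else 0)"
    using E_sum xy by (intro sum.cong refl) auto
  also have "\<dots> = X $$ (x, y)" using xy by simp
  finally show ?thesis by simp
qed

lemma eq_by_E:
  assumes X: "X \<in> carrier_mat n n" and Y: "Y \<in> carrier_mat n n"
    and XY: "\<And>j. j \<le> d \<Longrightarrow> X * E j = Y * E j"
  shows "X = Y"
  using X Y by (intro mat_eqI_n) (auto simp: sum_decomp[OF X] sum_decomp[OF Y] XY)

lemma E_coef_one:
  assumes "j \<le> d" "E j = c \<cdot>\<^sub>m E j"
  shows "c = 1"
proof -
  obtain u v where uv: "u < n" "v < n" "E j $$ (u, v) \<noteq> 0"
    using nonzero_entry[OF E_carrier[OF assms(1)] E_nz[OF assms(1)]] by blast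
  have "E j $$ (u, v) = c * E j $$ (u, v)"
    using assms(2) uv E_carrier[OF assms(1)] by (metis index_smult_mat(1) carrier_matD)
  thus ?thesis using uv by simp
qed

lemma E_coef_eq:
  assumes "j \<le> d" "c \<cdot>\<^sub>m E j = c' \<cdot>\<^sub>m E j"
  shows "c = c'"
proof -
  obtain u v where uv: "u < n" "v < n" "E j $$ (u, v) \<noteq> 0"
    using nonzero_entry[OF E_carrier[OF assms(1)] E_nz[OF assms(1)]] by blast
  have "c * E j $$ (u, v) = c' * E j $$ (u, v)"
    using assms(2) uv E_carrier[OF assms(1)] by (metis index_smult_mat(1) carrier_matD)
  thus ?thesis using uv by simp
qed

end

lemma adj_dims[simp]: "dim_row (adj_mat n S) = n" "dim_col (adj_mat n S) = n"
  by (simp_all add: adj_mat_def)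

locale setting =
  fixes n :: nat and R :: "nat \<Rightarrow> (nat \<times> nat) set"
    and E Et :: "nat \<Rightarrow> complex mat"
  assumes comm: "commutative_scheme n 4 R"
    and tr34: "(R 3)\<inverse> = R 4"
    and sym012: "\<forall>i\<le>2. (R i)\<inverse> = R i"
    and Ep: "prim_idempotents n 4 R E"
    and amor: "amorphic n 3 (symmetrization R)"
    and Etp: "prim_idempotents n 3 (symmetrization R) Et"
    and numbering: "\<forall>i\<in>{1,2,3}. \<exists>a b :: complex. a \<noteq> b \<and>
        adj_mat n (symmetrization R i) * Et 0
          = of_nat (valency n (symmetrization R i)) \<cdot>\<^sub>m Et 0 \<and>
        adj_mat n (symmetrization R i) * Et i = b \<cdot>\<^sub>m Et i \<and>
        (\<forall>j\<in>{1,2,3}. j \<noteq> i \<longrightarrow> adj_mat n (symmetrization R i) * Et j = a \<cdot>\<^sub>m Et j)"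
    and notin: "Et 3 \<notin> {E 1, E 2, E 3, E 4}"
begin

abbreviation S where "S \<equiv> symmetrization R"

lemma as4: "assoc_scheme n 4 R" using comm unfolding commutative_scheme_def by blast
lemma cc4: "comm_counts n 4 R" using comm unfolding commutative_scheme_def comm_counts_def by blast
lemma sym3: "symmetric_scheme n 3 S" using amor unfolding amorphic_def by blast
lemma as3: "assoc_scheme n 3 S" using sym3 unfolding symmetric_scheme_def by blast
lemma cc3: "comm_counts n 3 S" using sym_comm[OF sym3] .
lemma S_sym: "l \<le> 3 \<Longrightarrow> (S l)\<inverse> = S l" using sym3 unfolding symmetric_scheme_def by blast

sublocale s4: scheme_E n 4 R E
  by unfold_locales (rule as4, rule cc4, rule Ep)

sublocale s3: scheme_E n 3 S Et
  by unfold_locales (rule as3, rule cc3, rule Etp)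

definition A :: "nat \<Rightarrow> complex mat" where "A k = adj_mat n (R k)"
definition At :: "nat \<Rightarrow> complex mat" where "At l = adj_mat n (S l)"

lemma A_carrier[simp]: "A k \<in> carrier_mat n n" by (simp add: A_def)
lemma At_carrier[simp]: "At k \<in> carrier_mat n n" by (simp add: At_def)

lemma S0: "S 0 = R 0" and S1: "S 1 = R 1" and S2: "S 2 = R 2" and S3: "S 3 = R 3 \<union> R 4"
  by (simp_all add: symmetrization_def)

lemma R34_disj: "(x, y) \<in> R 3 \<Longrightarrow> (x, y) \<in> R 4 \<Longrightarrow> False"
  using s4.disj[of 3 4 x y] by simp

lemma At12: "At 1 = A 1" "At 2 = A 2" by (simp_all add: At_def A_def symmetrization_def)

lemma At3: "At 3 = A 3 + A 4"
  by (rule mat_eqI_n[where n = n]) (auto simp: At_def A_def S3 dest: R34_disj)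

lemma A4T: "A 4 = transpose_mat (A 3)"
  by (rule mat_eqI_n[where n = n]) (auto simp: A_def simp flip: tr34)

lemma AtT: "l \<le> 3 \<Longrightarrow> transpose_mat (At l) = At l"
  by (rule mat_eqI_n[where n = n]) (auto simp: At_def dest: S_sym intro: converseI)

lemma A34_ne: "A 3 \<noteq> A 4"
proof
  assume eq: "A 3 = A 4"
  obtain x y where xy: "(x, y) \<in> R 3" using s4.rel_ne[of 3] by auto
  have "x < n" "y < n" using s4.rel_sub[OF _ xy] by auto
  hence "A 3 $$ (x, y) = A 4 $$ (x, y)" using eq by simp
  thus False using xy R34_disj \<open>x < n\<close> \<open>y < n\<close> by (simp add: A_def split: if_splits)
qed

end

context setting begin

lemma A_BM: "k \<le> 4 \<Longrightarrow> A k \<in> s4.BM" unfolding A_def by (rule s4.BM_adj)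
lemma At_BM: "l \<le> 3 \<Longrightarrow> At l \<in> s3.BM" unfolding At_def by (rule s3.BM_adj)

lemma R_sym012: "i \<le> 2 \<Longrightarrow> (y, x) \<in> R i \<longleftrightarrow> (x, y) \<in> R i"
  using sym012 by (metis converse_iff)

lemma R_tr34: "(y, x) \<in> R 3 \<longleftrightarrow> (x, y) \<in> R 4" "(y, x) \<in> R 4 \<longleftrightarrow> (x, y) \<in> R 3"
  using tr34 by auto

lemma BM3_sub:
  assumes X: "X \<in> s3.BM"
  shows "X \<in> s4.BM"
proof -
  obtain c where c: "\<forall>x<n. \<forall>y<n. X $$ (x, y) = (\<Sum>i\<le>3. c i * s3.ind i x y)"
    using s3.BM_entry[OF X] by blast
  show ?thesis
  proof (rule s4.BM_intro[of _ "\<lambda>i. if i = 4 then c 3 else c i"])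
    show "X \<in> carrier_mat n n" using s3.BM_carrier[OF X] .
    fix x y assume xy: "x < n" "y < n"
    obtain k where k: "k \<le> 4" "(x, y) \<in> R k" using s4.unique_rel[OF xy] by blast
    have rhs: "(\<Sum>i\<le>4. (if i = 4 then c 3 else c i) * s4.ind i x y) = (if k = 4 then c 3 else c k)"
      by (rule s4.ind_single[OF xy k(2) k(1)])
    show "X $$ (x, y) = (\<Sum>i\<le>4. (if i = 4 then c 3 else c i) * s4.ind i x y)"
    proof (cases "k \<le> 2")
      case True
      hence "(x, y) \<in> S k" using k by (simp add: symmetrization_def)
      hence "X $$ (x, y) = c k" using c xy s3.ind_single[OF xy _] True by simp
      thus ?thesis using rhs True by simp
    next
      case False
      hence k34: "k = 3 \<or> k = 4" using k(1) by auto
      hence "(x, y) \<in> S 3" using k by (auto simp: symmetrization_def)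
      hence "X $$ (x, y) = c 3" using c xy s3.ind_single[OF xy _] by simp
      thus ?thesis using rhs k34 by auto
    qed
  qed
qed

lemma BM3_sym:
  assumes X: "X \<in> s3.BM"
  shows "transpose_mat X = X"
proof -
  obtain c where c: "\<forall>x<n. \<forall>y<n. X $$ (x, y) = (\<Sum>i\<le>3. c i * s3.ind i x y)"
    using s3.BM_entry[OF X] by blast
  have Xc: "X \<in> carrier_mat n n" using s3.BM_carrier[OF X] .
  show ?thesis
  proof (rule mat_eqI_n[where n = n])
    show "transpose_mat X \<in> carrier_mat n n" "X \<in> carrier_mat n n" using Xc by auto
    fix x y assume xy: "x < n" "y < n"
    have "s3.ind i y x = s3.ind i x y" if "i \<le> 3" for i
      using S_sym[OF that] unfolding s3.ind_def by (metis converse_iff)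
    hence "(\<Sum>i\<le>3. c i * s3.ind i y x) = (\<Sum>i\<le>3. c i * s3.ind i x y)" by simp
    thus "transpose_mat X $$ (x, y) = X $$ (x, y)" using c xy Xc by simp
  qed
qed

lemma BM4_T:
  assumes X: "X \<in> s4.BM"
  shows "transpose_mat X \<in> s4.BM"
proof -
  obtain c where c: "\<forall>x<n. \<forall>y<n. X $$ (x, y) = (\<Sum>i\<le>4. c i * s4.ind i x y)"
    using s4.BM_entry[OF X] by blast
  have Xc: "X \<in> carrier_mat n n" using s4.BM_carrier[OF X] .
  show ?thesis
  proof (rule s4.BM_intro[of _ "\<lambda>i. if i = 3 then c 4 else if i = 4 then c 3 else c i"])
    show "transpose_mat X \<in> carrier_mat n n" using Xc by simp
    fix x y assume xy: "x < n" "y < n"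
    obtain k where k: "k \<le> 4" "(y, x) \<in> R k" using s4.unique_rel[OF xy(2,1)] by blast
    define k' where "k' = (if k = 3 then 4 else if k = 4 then 3 else k)"
    have k': "k' \<le> 4" "(x, y) \<in> R k'"
      using k R_sym012[of k y x] R_tr34[of y x] unfolding k'_def by auto
    have "X $$ (y, x) = c k" using c xy s4.ind_single[OF xy(2,1) k(2) k(1)] by simp
    moreover have "(\<Sum>i\<le>4. (if i = 3 then c 4 else if i = 4 then c 3 else c i) * s4.ind i x y)
        = (if k' = 3 then c 4 else if k' = 4 then c 3 else c k')"
      by (rule s4.ind_single[OF xy k'(2) k'(1)])
    ultimately have "X $$ (y, x) = (\<Sum>i\<le>4. (if i = 3 then c 4 else if i = 4 then c 3 else c i) * s4.ind i x y)"
      unfolding k'_def by auto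
    thus "transpose_mat X $$ (x, y) = (\<Sum>i\<le>4. (if i = 3 then c 4 else if i = 4 then c 3 else c i) * s4.ind i x y)"
      using xy Xc by simp
  qed
qed

lemma E_T:
  assumes j: "j \<le> 4"
  shows "\<exists>j'\<le>4. transpose_mat (E j) = E j'"
proof (rule s4.E_complete)
  let ?T = "transpose_mat (E j)"
  have Ec: "E j \<in> carrier_mat n n" using s4.E_carrier[OF j] .
  have TBM: "?T \<in> s4.BM" using BM4_T[OF s4.E_BM[OF j]] .
  have idem: "?T * ?T = ?T"
    using transpose_mult[OF Ec Ec] s4.E_idem[OF j] by simp
  have nz: "?T \<noteq> 0\<^sub>m n n"
  proof
    assume "?T = 0\<^sub>m n n"
    hence "E j = transpose_mat (0\<^sub>m n n)" by (metis transpose_transpose)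
    moreover have "transpose_mat (0\<^sub>m n n) = (0\<^sub>m n n :: complex mat)" by (intro eq_matI) auto
    ultimately have "E j = 0\<^sub>m n n" by simp
    thus False using s4.E_nz[OF j] by simp
  qed
  have mini: "F = 0\<^sub>m n n \<or> F = ?T" if F: "F \<in> s4.BM" "F * F = F" "?T * F = F" for F
  proof -
    have Fc: "F \<in> carrier_mat n n" using s4.BM_carrier[OF F(1)] .
    let ?G = "transpose_mat F"
    have GBM: "?G \<in> s4.BM" using BM4_T[OF F(1)] .
    have Gidem: "?G * ?G = ?G" using transpose_mult[OF Fc Fc] F(2) by simp
    have "?G * E j = ?G" using transpose_mult[of ?T n n F n] Fc Ec F(3) by simp
    hence "E j * ?G = ?G" using s4.BM_comm[OF GBM s4.E_BM[OF j]] by simp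
    hence "?G = 0\<^sub>m n n \<or> ?G = E j" using s4.E_min[OF j GBM Gidem] by blast
    moreover have "transpose_mat (0\<^sub>m n n) = (0\<^sub>m n n :: complex mat)" by (intro eq_matI) auto
    ultimately show ?thesis by (metis transpose_transpose)
  qed
  show "primitive_idempotent n 4 R ?T"
    unfolding primitive_idempotent_def using TBM idem nz mini by blast
qed

end

lemma smult_smult_mat': "(a::complex) \<cdot>\<^sub>m (b \<cdot>\<^sub>m M) = (a * b) \<cdot>\<^sub>m M"
  by (intro eq_matI) auto

context scheme_E begin

lemma E_dim[simp]: "j \<le> d \<Longrightarrow> dim_row (E j) = n" "j \<le> d \<Longrightarrow> dim_col (E j) = n"
  using E_carrier by auto

lemma sum_decomp_left:
  assumes X: "X \<in> carrier_mat n n" and xy: "x < n" "y < n"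
  shows "X $$ (x, y) = (\<Sum>j\<le>d. (E j * X) $$ (x, y))"
proof -
  have "(\<Sum>j\<le>d. (E j * X) $$ (x, y)) = (\<Sum>j\<le>d. \<Sum>z<n. E j $$ (x, z) * X $$ (z, y))"
    using xy X E_carrier by (intro sum.cong refl) (simp add: mult_entry del: index_mult_mat)
  also have "\<dots> = (\<Sum>z<n. (\<Sum>j\<le>d. E j $$ (x, z)) * X $$ (z, y))"
    by (subst sum.swap) (simp add: sum_distrib_right)
  also have "\<dots> = (\<Sum>z<n. if z = x then X $$ (x, y) else 0)"
    using E_sum xy by (intro sum.cong refl) auto
  also have "\<dots> = X $$ (x, y)" using xy by simp
  finally show ?thesis by simp
qed

end

context setting begin

lemma Et_BM4: "m \<le> 3 \<Longrightarrow> Et m \<in> s4.BM"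
  using BM3_sub s3.E_BM by blast

definition T :: "nat \<Rightarrow> nat \<Rightarrow> complex" where
  "T m j = (SOME c. Et m * E j = c \<cdot>\<^sub>m E j)"

lemma T_eq: "m \<le> 3 \<Longrightarrow> j \<le> 4 \<Longrightarrow> Et m * E j = T m j \<cdot>\<^sub>m E j"
  unfolding T_def by (rule someI_ex[OF s4.E_eig[OF Et_BM4]])

lemma T01: assumes m: "m \<le> 3" and j: "j \<le> 4" shows "T m j = 0 \<or> T m j = 1"
proof -
  have Ec: "E j \<in> carrier_mat n n" using s4.E_carrier[OF j] .
  have Etc: "Et m \<in> carrier_mat n n" using s3.E_carrier[OF m] .
  have "(Et m * Et m) * E j = Et m * (Et m * E j)" using Ec Etc by (simp add: assoc_mult_mat[of _ n n _ n _ n])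
  also have "\<dots> = Et m * (T m j \<cdot>\<^sub>m E j)" using T_eq[OF m j] by simp
  also have "\<dots> = T m j \<cdot>\<^sub>m (Et m * E j)" using mult_smult_distrib[OF Etc Ec] .
  also have "\<dots> = (T m j * T m j) \<cdot>\<^sub>m E j" using T_eq[OF m j] smult_smult_mat' by simp
  finally have "(T m j * T m j) \<cdot>\<^sub>m E j = T m j \<cdot>\<^sub>m E j"
    using s3.E_idem[OF m] T_eq[OF m j] by simp
  hence "T m j * T m j = T m j" using s4.E_coef_eq[OF j] by blast
  thus ?thesis by (metis mult_cancel_left2 mult_eq_0_iff)
qed

lemma Tsum: assumes j: "j \<le> 4" shows "(\<Sum>m\<le>3. T m j) = 1"
proof -
  have Ec: "E j \<in> carrier_mat n n" using s4.E_carrier[OF j] .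
  obtain x y where xy: "x < n" "y < n" "E j $$ (x, y) \<noteq> 0"
    using nonzero_entry[OF Ec s4.E_nz[OF j]] by blast
  have "E j $$ (x, y) = (\<Sum>m\<le>3. (Et m * E j) $$ (x, y))"
    by (rule s3.sum_decomp_left[OF Ec xy(1,2)])
  also have "\<dots> = (\<Sum>m\<le>3. T m j * E j $$ (x, y))"
    using T_eq j xy Ec by (intro sum.cong refl) simp
  also have "\<dots> = (\<Sum>m\<le>3. T m j) * E j $$ (x, y)" by (simp add: sum_distrib_right)
  finally show ?thesis using xy(3) by simp
qed

lemma Trow: assumes m: "m \<le> 3" and xy: "x < n" "y < n"
  shows "Et m $$ (x, y) = (\<Sum>j\<le>4. T m j * E j $$ (x, y))"
proof -
  have "Et m $$ (x, y) = (\<Sum>j\<le>4. (Et m * E j) $$ (x, y))"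
    by (rule s4.sum_decomp[OF s3.E_carrier[OF m] xy])
  also have "\<dots> = (\<Sum>j\<le>4. T m j * E j $$ (x, y))"
    using T_eq m xy s4.E_carrier by (intro sum.cong refl) simp
  finally show ?thesis .
qed

lemma T_uniq:
  assumes "m \<le> 3" "m' \<le> 3" "j \<le> 4" "T m j = 1" "T m' j = 1"
  shows "m = m'"
proof (rule ccontr)
  assume mm: "m \<noteq> m'"
  have s: "T 0 j + T 1 j + T 2 j + T 3 j = 1" using Tsum[OF assms(3)] unfolding sum3 .
  have t: "T 0 j = 0 \<or> T 0 j = 1" "T 1 j = 0 \<or> T 1 j = 1" "T 2 j = 0 \<or> T 2 j = 1" "T 3 j = 0 \<or> T 3 j = 1"
    using T01 assms(3) by auto
  have "m = 0 \<or> m = 1 \<or> m = 2 \<or> m = 3" "m' = 0 \<or> m' = 1 \<or> m' = 2 \<or> m' = 3" using assms(1,2) by auto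
  thus False using s t mm assms(4,5) by auto
qed

lemma T_zero:
  assumes "m \<le> 3" "m' \<le> 3" "j \<le> 4" "T m j = 1" "m' \<noteq> m"
  shows "T m' j = 0"
  using T01[OF assms(2,3)] T_uniq[OF assms(1,2,3,4)] assms(5) by auto

lemma T_exists:
  assumes m: "m \<le> 3" shows "\<exists>j\<le>4. T m j = 1"
proof (rule ccontr)
  assume "\<not> ?thesis"
  hence z: "\<And>j. j \<le> 4 \<Longrightarrow> T m j = 0" using T01[OF m] by blast
  have "Et m = 0\<^sub>m n n"
    by (rule mat_eqI_n[where n = n]) (use s3.E_carrier[OF m] Trow[OF m] z in auto)
  thus False using s3.E_nz[OF m] by simp
qed

lemma E0_eq: "Et 0 = E 0" using s3.E0 s4.E0 by simp

lemma T_two: "\<exists>k l. k \<le> 4 \<and> l \<le> 4 \<and> k \<noteq> l \<and> T 3 k = 1 \<and> T 3 l = 1"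
proof (rule ccontr)
  assume no: "\<not> ?thesis"
  obtain k where k: "k \<le> 4" "T 3 k = 1" using T_exists[of 3] by auto
  have z: "T 3 j = (if j = k then 1 else 0)" if "j \<le> 4" for j
    using no k that T01[of 3 j] by auto
  have "Et 3 = E k"
  proof (rule mat_eqI_n[where n = n])
    show "Et 3 \<in> carrier_mat n n" "E k \<in> carrier_mat n n" using s3.E_carrier s4.E_carrier k by auto
    fix x y assume xy: "x < n" "y < n"
    have "Et 3 $$ (x, y) = (\<Sum>j\<le>4. T 3 j * E j $$ (x, y))" using Trow xy by simp
    also have "\<dots> = (\<Sum>j\<le>4. (if j = k then 1 else 0) * E j $$ (x, y))"
      using z by (intro sum.cong refl) simp
    also have "\<dots> = E k $$ (x, y)" using s4.sum_delta_mult[OF k(1)] by simp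
    finally show "Et 3 $$ (x, y) = E k $$ (x, y)" .
  qed
  moreover have "k \<noteq> 0"
  proof
    assume "k = 0"
    hence "Et 3 = Et 0" using \<open>Et 3 = E k\<close> E0_eq by simp
    thus False using s3.E_inj[of 3 0] by simp
  qed
  moreover have "k = 1 \<or> k = 2 \<or> k = 3 \<or> k = 4" using k(1) \<open>k \<noteq> 0\<close> by auto
  ultimately show False using notin by auto
qed

lemma struct5:
  "\<exists>j0 j1 j2 k l. {..4} = {j0, j1, j2, k, l} \<and> distinct [j0, j1, j2, k, l] \<and>
     T 0 j0 = 1 \<and> T 1 j1 = 1 \<and> T 2 j2 = 1 \<and> T 3 k = 1 \<and> T 3 l = 1"
proof -
  obtain j0 where j0: "j0 \<le> 4" "T 0 j0 = 1" using T_exists[of 0] by auto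
  obtain j1 where j1: "j1 \<le> 4" "T 1 j1 = 1" using T_exists[of 1] by auto
  obtain j2 where j2: "j2 \<le> 4" "T 2 j2 = 1" using T_exists[of 2] by auto
  obtain k l where kl: "k \<le> 4" "l \<le> 4" "k \<noteq> l" "T 3 k = 1" "T 3 l = 1" using T_two by auto
  have ne: "a \<noteq> b" if "T m a = 1" "T m' b = 1" "m \<noteq> m'" "m \<le> 3" "m' \<le> 3" "b \<le> 4" for a b m m'
    using T_uniq[OF that(4,5,6)] that by auto
  have d: "distinct [j0, j1, j2, k, l]"
    using ne[OF j0(2) j1(2)] ne[OF j0(2) j2(2)] ne[OF j1(2) j2(2)]
      ne[OF j0(2) kl(4)] ne[OF j0(2) kl(5)] ne[OF j1(2) kl(4)] ne[OF j1(2) kl(5)]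
      ne[OF j2(2) kl(4)] ne[OF j2(2) kl(5)] kl j0 j1 j2 by auto
  have sub: "{j0, j1, j2, k, l} \<subseteq> {..4}" using j0 j1 j2 kl by auto
  have c: "card {j0, j1, j2, k, l} = card {..(4::nat)}" using d by simp
  have "{j0, j1, j2, k, l} = {..4}" by (rule card_subset_eq[OF _ sub c]) simp
  thus ?thesis using d j0 j1 j2 kl by metis
qed

end

lemma smult_one': "(1::complex) \<cdot>\<^sub>m M = M"
  by (intro eq_matI) auto

lemma transpose_smult': "transpose_mat ((c::complex) \<cdot>\<^sub>m M) = c \<cdot>\<^sub>m transpose_mat M"
  by (intro eq_matI) auto

locale setting2 = setting +
  fixes j0 j1 j2 k l :: nat
  assumes all5: "{..4} = {j0, j1, j2, k, l}"
    and dist: "distinct [j0, j1, j2, k, l]"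
    and Tj0: "T 0 j0 = 1" and Tj1: "T 1 j1 = 1" and Tj2: "T 2 j2 = 1"
    and Tk: "T 3 k = 1" and Tl: "T 3 l = 1"
begin

lemma idx: "j0 \<le> 4" "j1 \<le> 4" "j2 \<le> 4" "k \<le> 4" "l \<le> 4"
  using all5 by (metis atMost_iff insertCI)+

definition jj :: "nat \<Rightarrow> nat" where "jj m = (if m = 0 then j0 else if m = 1 then j1 else j2)"

lemma jj_idx: "jj m \<le> 4" unfolding jj_def using idx by auto
lemma Tjj: assumes "m \<le> 2" shows "T m (jj m) = 1"
proof -
  have "m = 0 \<or> m = 1 \<or> m = 2" using assms by auto
  thus ?thesis unfolding jj_def using Tj0 Tj1 Tj2 by auto
qed

lemma Et_E: "m \<le> 3 \<Longrightarrow> j \<le> 4 \<Longrightarrow> T m j = 1 \<Longrightarrow> Et m * E j = E j"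
  using T_eq by (simp add: smult_one')

definition ab :: "(nat \<Rightarrow> complex) \<times> (nat \<Rightarrow> complex)" where
  "ab = (SOME p. \<forall>i\<in>{1,2,3}. fst p i \<noteq> snd p i \<and>
        adj_mat n (S i) * Et 0 = of_nat (valency n (S i)) \<cdot>\<^sub>m Et 0 \<and>
        adj_mat n (S i) * Et i = snd p i \<cdot>\<^sub>m Et i \<and>
        (\<forall>j\<in>{1,2,3}. j \<noteq> i \<longrightarrow> adj_mat n (S i) * Et j = fst p i \<cdot>\<^sub>m Et j))"

lemma ab_prop: "\<forall>i\<in>{1,2,3}. fst ab i \<noteq> snd ab i \<and>
        adj_mat n (S i) * Et 0 = of_nat (valency n (S i)) \<cdot>\<^sub>m Et 0 \<and>
        adj_mat n (S i) * Et i = snd ab i \<cdot>\<^sub>m Et i \<and>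
        (\<forall>j\<in>{1,2,3}. j \<noteq> i \<longrightarrow> adj_mat n (S i) * Et j = fst ab i \<cdot>\<^sub>m Et j)"
proof -
  have "\<forall>i\<in>{1,2,3}. \<exists>q. fst q \<noteq> snd q \<and>
        adj_mat n (S i) * Et 0 = of_nat (valency n (S i)) \<cdot>\<^sub>m Et 0 \<and>
        adj_mat n (S i) * Et i = snd q \<cdot>\<^sub>m Et i \<and>
        (\<forall>j\<in>{1,2,3}. j \<noteq> i \<longrightarrow> adj_mat n (S i) * Et j = fst q \<cdot>\<^sub>m Et j)"
    using numbering by fastforce
  then obtain f where f: "\<forall>i\<in>{1,2,3}. fst (f i) \<noteq> snd (f i) \<and>
        adj_mat n (S i) * Et 0 = of_nat (valency n (S i)) \<cdot>\<^sub>m Et 0 \<and>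
        adj_mat n (S i) * Et i = snd (f i) \<cdot>\<^sub>m Et i \<and>
        (\<forall>j\<in>{1,2,3}. j \<noteq> i \<longrightarrow> adj_mat n (S i) * Et j = fst (f i) \<cdot>\<^sub>m Et j)"
    by (rule bchoice[elim_format]) blast
  have "\<exists>p. \<forall>i\<in>{1,2,3}. fst p i \<noteq> snd p i \<and>
        adj_mat n (S i) * Et 0 = of_nat (valency n (S i)) \<cdot>\<^sub>m Et 0 \<and>
        adj_mat n (S i) * Et i = snd p i \<cdot>\<^sub>m Et i \<and>
        (\<forall>j\<in>{1,2,3}. j \<noteq> i \<longrightarrow> adj_mat n (S i) * Et j = fst p i \<cdot>\<^sub>m Et j)"
    by (rule exI[of _ "(\<lambda>i. fst (f i), \<lambda>i. snd (f i))"]) (use f in simp)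
  thus ?thesis unfolding ab_def by (rule someI_ex)
qed

definition kv :: "nat \<Rightarrow> complex" where "kv i = of_nat (valency n (S i))"

definition th :: "nat \<Rightarrow> nat \<Rightarrow> complex" where
  "th i m = (if m = 0 then kv i else if m = i then snd ab i else fst ab i)"

lemma ab_ne: "i \<in> {1,2,3} \<Longrightarrow> fst ab i \<noteq> snd ab i" using ab_prop by blast

lemma th_eq: assumes i: "i \<in> {1,2,3}" and m: "m \<le> 3"
  shows "At i * Et m = th i m \<cdot>\<^sub>m Et m"
proof -
  have "m = 0 \<or> m = i \<or> (m \<in> {1,2,3} \<and> m \<noteq> i)" using m by auto
  thus ?thesis using ab_prop i unfolding th_def kv_def At_def by auto
qed

lemma AtE: assumes i: "i \<in> {1,2,3}" and m: "m \<le> 3" and j: "j \<le> 4" and T: "T m j = 1"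
  shows "At i * E j = th i m \<cdot>\<^sub>m E j"
proof -
  have "At i * E j = At i * (Et m * E j)" using Et_E[OF m j T] by simp
  also have "\<dots> = (At i * Et m) * E j"
    using s3.E_carrier[OF m] s4.E_carrier[OF j] by (simp add: assoc_mult_mat[of _ n n _ n _ n])
  also have "\<dots> = th i m \<cdot>\<^sub>m (Et m * E j)"
    using th_eq[OF i m] mult_smult_assoc_mat[OF s3.E_carrier[OF m] s4.E_carrier[OF j]] by simp
  also have "\<dots> = th i m \<cdot>\<^sub>m E j" using Et_E[OF m j T] by simp
  finally show ?thesis .
qed

definition sg :: "nat \<Rightarrow> nat" where "sg j = (SOME j'. j' \<le> 4 \<and> transpose_mat (E j) = E j')"

lemma sg: "j \<le> 4 \<Longrightarrow> sg j \<le> 4 \<and> transpose_mat (E j) = E (sg j)"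
  unfolding sg_def by (rule someI_ex) (use E_T in blast)

lemma T_sg: assumes m: "m \<le> 3" and j: "j \<le> 4" and T: "T m j = 1"
  shows "T m (sg j) = 1"
proof -
  have Ec: "E j \<in> carrier_mat n n" using s4.E_carrier[OF j] .
  have Etc: "Et m \<in> carrier_mat n n" using s3.E_carrier[OF m] .
  have "transpose_mat (Et m * E j) = transpose_mat (E j)" using Et_E[OF m j T] by simp
  hence "E (sg j) * Et m = E (sg j)"
    using transpose_mult[OF Etc Ec] BM3_sym[OF s3.E_BM[OF m]] sg[OF j] by simp
  hence "Et m * E (sg j) = E (sg j)"
    using s4.BM_comm[OF Et_BM4[OF m] s4.E_BM[of "sg j"]] sg[OF j] by simp
  hence "E (sg j) = T m (sg j) \<cdot>\<^sub>m E (sg j)" using T_eq[OF m] sg[OF j] by simp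
  thus ?thesis using s4.E_coef_one[of "sg j" "T m (sg j)"] sg[OF j] by simp
qed

lemma in5: "j \<le> 4 \<Longrightarrow> j = j0 \<or> j = j1 \<or> j = j2 \<or> j = k \<or> j = l"
  using all5 by auto

lemma sg_jj: assumes m: "m \<le> 2" shows "sg (jj m) = jj m"
proof -
  have T1: "T m (sg (jj m)) = 1" using T_sg[OF _ jj_idx Tjj[OF m]] m by simp
  have s4: "sg (jj m) \<le> 4" using sg[OF jj_idx] by simp
  have z: "T m' j = 0" if "m' \<le> 3" "j \<le> 4" "T m'' j = 1" "m'' \<le> 3" "m' \<noteq> m''" for m' m'' j
    using T_zero that by blast
  show ?thesis
  proof (rule ccontr)
    assume ne: "sg (jj m) \<noteq> jj m"
    have "m = 0 \<or> m = 1 \<or> m = 2" using m by auto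
    moreover have "sg (jj m) = j0 \<or> sg (jj m) = j1 \<or> sg (jj m) = j2 \<or> sg (jj m) = k \<or> sg (jj m) = l"
      using in5[OF s4] .
    ultimately show False
      using T1 ne z[of m j0 0] z[of m j1 1] z[of m j2 2] z[of m k 3] z[of m l 3]
        Tj0 Tj1 Tj2 Tk Tl idx unfolding jj_def by auto
  qed
qed

lemma sg_kl: "sg k = k \<or> sg k = l" "sg l = k \<or> sg l = l"
proof -
  have z: "T 3 j = 0" if "j \<le> 4" "T m'' j = 1" "m'' \<le> 3" "3 \<noteq> m''" for m'' j
    using T_zero[OF that(3) _ that(1,2)] that(4) by auto
  have "T 3 (sg k) = 1" using T_sg[OF _ idx(4) Tk] by simp
  moreover have "T 3 (sg l) = 1" using T_sg[OF _ idx(5) Tl] by simp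
  moreover have "sg k = j0 \<or> sg k = j1 \<or> sg k = j2 \<or> sg k = k \<or> sg k = l" using in5 sg idx by blast
  moreover have "sg l = j0 \<or> sg l = j1 \<or> sg l = j2 \<or> sg l = k \<or> sg l = l" using in5 sg idx by blast
  moreover have "T 3 j0 = 0" "T 3 j1 = 0" "T 3 j2 = 0"
    using z[OF idx(1) Tj0] z[OF idx(2) Tj1] z[OF idx(3) Tj2] by auto
  ultimately show "sg k = k \<or> sg k = l" "sg l = k \<or> sg l = l" by auto
qed

end

lemma adj_col:
  assumes F: "F \<in> carrier_mat n n" and MF: "adj_mat n Q * F = c \<cdot>\<^sub>m F" and x: "x < n" and y: "y < n"
  shows "(\<Sum>z<n. (if (x, z) \<in> Q then 1 else 0) * F $$ (z, y)) = c * F $$ (x, y)"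
proof -
  have "(adj_mat n Q * F) $$ (x, y) = (\<Sum>z<n. adj_mat n Q $$ (x, z) * F $$ (z, y))"
    using mult_entry[OF adj_carrier F x y] .
  also have "\<dots> = (\<Sum>z<n. (if (x, z) \<in> Q then 1 else 0) * F $$ (z, y))"
    using x by (intro sum.cong refl) simp
  finally show ?thesis using MF F x y by simp
qed

context setting2 begin

definition al :: "nat \<Rightarrow> complex" where "al j = (SOME c. A 3 * E j = c \<cdot>\<^sub>m E j)"

lemma al_eq: "j \<le> 4 \<Longrightarrow> A 3 * E j = al j \<cdot>\<^sub>m E j"
  unfolding al_def by (rule someI_ex[OF s4.E_eig[OF A_BM]]) simp_all

lemma A4_sg: assumes j: "j \<le> 4" shows "A 4 * E (sg j) = al j \<cdot>\<^sub>m E (sg j)"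
proof -
  have Ec: "E j \<in> carrier_mat n n" using s4.E_carrier[OF j] .
  have "A 4 * E (sg j) = transpose_mat (A 3) * transpose_mat (E j)" using A4T sg[OF j] by simp
  also have "\<dots> = transpose_mat (E j * A 3)" using transpose_mult[OF Ec A_carrier[of 3]] by simp
  also have "\<dots> = transpose_mat (A 3 * E j)" using s4.BM_comm[OF s4.E_BM[OF j] A_BM[of 3]] by simp
  also have "\<dots> = al j \<cdot>\<^sub>m E (sg j)" using al_eq[OF j] sg[OF j] transpose_smult' by simp
  finally show ?thesis .
qed

lemma A4_jj: "m \<le> 2 \<Longrightarrow> A 4 * E (jj m) = al (jj m) \<cdot>\<^sub>m E (jj m)"
  using A4_sg[OF jj_idx, of m] sg_jj[of m] by simp

lemma E_T_inj: "i \<le> 4 \<Longrightarrow> j \<le> 4 \<Longrightarrow> transpose_mat (E i) = transpose_mat (E j) \<Longrightarrow> i = j"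
  by (metis transpose_transpose s4.E_inj)

lemma dist': "k \<noteq> l" "j0 \<noteq> k" "j0 \<noteq> l" "j1 \<noteq> k" "j1 \<noteq> l" "j2 \<noteq> k" "j2 \<noteq> l"
  "j0 \<noteq> j1" "j0 \<noteq> j2" "j1 \<noteq> j2"
  using dist by auto

lemma all_j: "j \<le> 4 \<Longrightarrow> j = jj 0 \<or> j = jj 1 \<or> j = jj 2 \<or> j = k \<or> j = l"
  using in5 unfolding jj_def by auto

lemma sg_k: "sg k = l" and sg_l: "sg l = k"
proof -
  have tk: "transpose_mat (E k) = E (sg k)" and tl: "transpose_mat (E l) = E (sg l)"
    using sg idx by auto
  have "sg k = l"
  proof (rule ccontr)
    assume "sg k \<noteq> l"
    hence sk: "sg k = k" using sg_kl by auto
    have sl: "sg l = l"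
    proof (rule ccontr)
      assume "sg l \<noteq> l"
      hence "sg l = k" using sg_kl by auto
      hence "transpose_mat (E l) = transpose_mat (E k)" using tk tl sk by simp
      thus False using E_T_inj idx dist' by blast
    qed
    have "A 3 = A 4"
    proof (rule s4.eq_by_E[OF A_carrier A_carrier])
      fix j :: nat assume j: "j \<le> 4"
      have "A 4 * E j = al j \<cdot>\<^sub>m E j"
        using all_j[OF j] A4_jj A4_sg[OF idx(4)] A4_sg[OF idx(5)] sk sl by auto
      thus "A 3 * E j = A 4 * E j" using al_eq[OF j] by simp
    qed
    thus False using A34_ne by simp
  qed
  moreover have "sg l = k"
  proof (rule ccontr)
    assume "sg l \<noteq> k"
    hence "sg l = l" using sg_kl by auto
    hence "transpose_mat (E k) = transpose_mat (E l)" using tk tl \<open>sg k = l\<close> by simp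
    thus False using E_T_inj idx dist' by blast
  qed
  ultimately show "sg k = l" "sg l = k" by auto
qed

lemma A4_l: "A 4 * E l = al k \<cdot>\<^sub>m E l" using A4_sg[OF idx(4)] sg_k by simp
lemma A4_k: "A 4 * E k = al l \<cdot>\<^sub>m E k" using A4_sg[OF idx(5)] sg_l by simp

lemma al_jj: assumes m: "m \<le> 2" shows "th 3 m = 2 * al (jj m)"
proof -
  have "At 3 * E (jj m) = th 3 m \<cdot>\<^sub>m E (jj m)"
    using AtE[of 3 m "jj m"] m jj_idx Tjj[OF m] by simp
  moreover have "At 3 * E (jj m) = (2 * al (jj m)) \<cdot>\<^sub>m E (jj m)"
  proof -
    have "At 3 * E (jj m) = A 3 * E (jj m) + A 4 * E (jj m)"
      using At3 add_mult_distrib_mat[OF A_carrier A_carrier s4.E_carrier[OF jj_idx]] by simp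
    also have "\<dots> = (2 * al (jj m)) \<cdot>\<^sub>m E (jj m)"
      using al_eq[OF jj_idx] A4_jj[OF m] by (intro eq_matI) auto
    finally show ?thesis .
  qed
  ultimately show ?thesis using s4.E_coef_eq[OF jj_idx] by metis
qed

lemma al_conj: "al k = cnj (al l)"
proof -
  have Ec: "E k \<in> carrier_mat n n" using s4.E_carrier[OF idx(4)] .
  obtain x0 c where xc: "x0 < n" "c < n" "E k $$ (x0, c) \<noteq> 0"
    using nonzero_entry[OF Ec s4.E_nz[OF idx(4)]] by blast
  show ?thesis
  proof (rule real_eig[where A = "\<lambda>x z. if (x, z) \<in> R 3 then 1 else 0" and v = "\<lambda>z. E k $$ (z, c)" and n = n])
    show "\<And>x z. cnj (if (x, z) \<in> R 3 then 1 else 0) = (if (x, z) \<in> R 3 then 1 else (0::complex))" by simp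
    show "\<And>x. x < n \<Longrightarrow> (\<Sum>z<n. (if (x, z) \<in> R 3 then 1 else 0) * E k $$ (z, c)) = al k * E k $$ (x, c)"
      using adj_col[OF Ec _ _ xc(2)] al_eq[OF idx(4)] unfolding A_def by blast
    show "(\<Sum>z<n. (if (z, x) \<in> R 3 then 1 else 0) * E k $$ (z, c)) = al l * E k $$ (x, c)"
      if x: "x < n" for x
    proof -
      have "(\<Sum>z<n. (if (z, x) \<in> R 3 then 1 else 0) * E k $$ (z, c))
          = (\<Sum>z<n. (if (x, z) \<in> R 4 then 1 else 0) * E k $$ (z, c))"
        by (intro sum.cong refl) (simp only: R_tr34(1))
      also have "\<dots> = al l * E k $$ (x, c)"
        using adj_col[OF Ec A4_k[unfolded A_def] x xc(2)] .
      finally show ?thesis .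
    qed
    show "\<exists>x<n. E k $$ (x, c) \<noteq> 0" using xc by blast
  qed
qed

lemma al_ne: "al k \<noteq> al l"
proof
  assume eq: "al k = al l"
  have "A 3 = A 4"
  proof (rule s4.eq_by_E[OF A_carrier A_carrier])
    fix j :: nat assume j: "j \<le> 4"
    have "A 4 * E j = al j \<cdot>\<^sub>m E j"
      using all_j[OF j] A4_jj A4_k A4_l eq by auto
    thus "A 3 * E j = A 4 * E j" using al_eq[OF j] by simp
  qed
  thus False using A34_ne by simp
qed

lemma Im_al: "Im (al k) \<noteq> 0" "Im (al l) \<noteq> 0"
proof -
  show "Im (al k) \<noteq> 0"
  proof
    assume "Im (al k) = 0"
    hence "cnj (al k) = al k" by (simp add: complex_eq_iff)
    hence "al l = al k" using al_conj by (metis complex_cnj_cnj)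
    thus False using al_ne by simp
  qed
  thus "Im (al l) \<noteq> 0" using al_conj by simp
qed

lemma th_real: assumes i: "i \<in> {1,2,3}" and m: "m \<le> 3" shows "Im (th i m) = 0"
proof -
  have Ec: "Et m \<in> carrier_mat n n" using s3.E_carrier[OF m] .
  obtain x0 c where xc: "x0 < n" "c < n" "Et m $$ (x0, c) \<noteq> 0"
    using nonzero_entry[OF Ec s3.E_nz[OF m]] by blast
  have il: "i \<le> 3" using i by auto
  have "th i m = cnj (th i m)"
  proof (rule real_eig[where A = "\<lambda>x z. if (x, z) \<in> S i then 1 else 0" and v = "\<lambda>z. Et m $$ (z, c)" and n = n])
    show "\<And>x z. cnj (if (x, z) \<in> S i then 1 else 0) = (if (x, z) \<in> S i then 1 else (0::complex))" by simp
    show "\<And>x. x < n \<Longrightarrow> (\<Sum>z<n. (if (x, z) \<in> S i then 1 else 0) * Et m $$ (z, c)) = th i m * Et m $$ (x, c)"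
      using adj_col[OF Ec _ _ xc(2)] th_eq[OF i m] unfolding At_def by blast
    have sy: "(z, x) \<in> S i \<longleftrightarrow> (x, z) \<in> S i" for x z using S_sym[OF il] by (metis converse_iff)
    show "\<And>x. x < n \<Longrightarrow> (\<Sum>z<n. (if (z, x) \<in> S i then 1 else 0) * Et m $$ (z, c)) = th i m * Et m $$ (x, c)"
      using adj_col[OF Ec _ _ xc(2)] th_eq[OF i m] unfolding At_def by (simp add: sy)
    show "\<exists>x<n. Et m $$ (x, c) \<noteq> 0" using xc by blast
  qed
  hence "Im (th i m) = Im (cnj (th i m))" by simp
  thus ?thesis by simp
qed

end

context setting2 begin

lemma Et0_entry: "x < n \<Longrightarrow> y < n \<Longrightarrow> Et 0 $$ (x, y) = 1 / of_nat n"
  using s3.E0 by (simp add: all_ones_def)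

lemma rowsum: assumes i: "i \<in> {1,2,3}" and x: "x < n"
  shows "(\<Sum>z<n. (if (x, z) \<in> S i then 1 else 0)) = kv i"
proof -
  have n: "0 < n" using s3.npos .
  have "(\<Sum>z<n. (if (x, z) \<in> S i then 1 else 0) * Et 0 $$ (z, 0)) = th i 0 * Et 0 $$ (x, 0)"
    using adj_col[OF s3.E_carrier[of 0] th_eq[OF i, of 0, unfolded At_def] x n] by simp
  hence "(\<Sum>z<n. (if (x, z) \<in> S i then 1 else 0) * (1 / of_nat n)) = kv i * (1 / of_nat n)"
    using Et0_entry x n unfolding th_def by simp
  hence "(\<Sum>z<n. (if (x, z) \<in> S i then 1 else 0)) * (1 / of_nat n) = kv i * (1 / of_nat n)"
    by (simp only: sum_distrib_right)
  moreover have nz: "(1 / of_nat n :: complex) \<noteq> 0" using n by simp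
  ultimately show ?thesis using mult_cancel_right by blast
qed

lemma th_bound: assumes i: "i \<in> {1,2,3}" and m: "m \<le> 3"
  shows "Re (th i m) \<le> real (valency n (S i))"
proof -
  have Ec: "Et m \<in> carrier_mat n n" using s3.E_carrier[OF m] .
  obtain x0 c where xc: "x0 < n" "c < n" "Et m $$ (x0, c) \<noteq> 0"
    using nonzero_entry[OF Ec s3.E_nz[OF m]] by blast
  have "cmod (th i m) \<le> real (valency n (S i))"
  proof (rule eig_bound[where A = "\<lambda>x z. if (x, z) \<in> S i then 1 else 0" and v = "\<lambda>z. Et m $$ (z, c)" and n = n])
    show "\<And>x z. (if (x, z) \<in> S i then 1 else 0) = (0::complex) \<or> (if (x, z) \<in> S i then 1 else 0) = (1::complex)" by simp
    show "\<And>x. x < n \<Longrightarrow> (\<Sum>z<n. (if (x, z) \<in> S i then 1 else 0)) = complex_of_real (real (valency n (S i)))"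
      using rowsum[OF i] unfolding kv_def by simp
    show "\<And>x. x < n \<Longrightarrow> (\<Sum>z<n. (if (x, z) \<in> S i then 1 else 0) * Et m $$ (z, c)) = th i m * Et m $$ (x, c)"
      using adj_col[OF Ec _ _ xc(2)] th_eq[OF i m] unfolding At_def by blast
    show "\<exists>x<n. Et m $$ (x, c) \<noteq> 0" using xc by blast
  qed
  thus ?thesis using complex_Re_le_cmod[of "th i m"] by linarith
qed

lemma J_Et0: "all_ones n = of_nat n \<cdot>\<^sub>m Et 0"
  using s3.E0 s3.npos by (intro eq_matI) (auto simp: all_ones_def)

lemma J_carrier: "all_ones n \<in> carrier_mat n n" by (simp add: all_ones_def)

lemma J_mult: assumes m: "m \<le> 3"
  shows "all_ones n * Et m = (if m = 0 then of_nat n \<cdot>\<^sub>m Et 0 else 0\<^sub>m n n)"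
proof -
  have "all_ones n * Et m = of_nat n \<cdot>\<^sub>m (Et 0 * Et m)"
    using J_Et0 mult_smult_assoc_mat[OF s3.E_carrier[of 0] s3.E_carrier[OF m]] by simp
  moreover have "of_nat n \<cdot>\<^sub>m (0\<^sub>m n n) = (0\<^sub>m n n :: complex mat)" by (intro eq_matI) auto
  ultimately show ?thesis using s3.E_orth[of 0 m] s3.E_idem[of 0] m by auto
qed

lemma merge_scheme: "f ` {1..3} = {1..2} \<Longrightarrow> assoc_scheme n 2 (merge_rel S 3 f)"
  using amor unfolding amorphic_def by blast

lemma merge1: "merge_rel S 3 f 1 = \<Union>{S l | l. 1 \<le> l \<and> l \<le> 3 \<and> f l = 1}"
  by (simp add: merge_rel_def)

lemma srg_apply:
  assumes f: "f ` {1..3} = {1..2}" and m: "m \<in> {1,2}"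
    and A0: "adj_mat n (merge_rel S 3 f 1) * Et 0 = ka \<cdot>\<^sub>m Et 0"
    and Am: "adj_mat n (merge_rel S 3 f 1) * Et m = ka \<cdot>\<^sub>m Et m"
    and xy: "(x, y) \<in> merge_rel S 3 f 1" and yz: "(y, z) \<in> merge_rel S 3 f 1" and xz: "x \<noteq> z"
  shows "(x, z) \<in> merge_rel S 3 f 1"
proof (rule srg_trans[OF merge_scheme[OF f] s3.E_carrier[of 0] s3.E_carrier[of m]
      s3.E_nz[of 0] s3.E_nz[of m] A0 Am _ _ xy yz xz])
  show "m \<le> 3" "0 \<le> (3::nat)" "0 \<le> (3::nat)" "m \<le> 3" using m by auto
  show "all_ones n * Et 0 = of_nat n \<cdot>\<^sub>m Et 0" using J_mult[of 0] by simp
  show "all_ones n * Et m = 0\<^sub>m n n" using J_mult[of m] m by auto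
qed

lemma no_double:
  assumes i: "i \<in> {1,2}" and m: "m \<in> {1,2}"
    and ti: "th i m = kv i" and t3: "th 3 m = kv 3"
  shows False
proof -
  have i3: "i \<in> {1,2,3}" "i \<le> 3" "i \<noteq> 3" using i by auto
  have m3: "m \<le> 3" using m by auto
  define f1 where "f1 l = (if l = i then 1 else 2::nat)" for l :: nat
  define f2 where "f2 l = (if l = 3 then 1 else 2::nat)" for l :: nat
  define f3 where "f3 l = (if l = i \<or> l = 3 then 1 else 2::nat)" for l :: nat
  have e13: "{1..3::nat} = {1,2,3}" "{1..2::nat} = {1,2}" by auto
  have f1i: "f1 ` {1..3} = {1..2}" using i unfolding e13 f1_def by auto
  have f2i: "f2 ` {1..3} = {1..2}" unfolding e13 f2_def by auto
  have f3i: "f3 ` {1..3} = {1..2}" using i unfolding e13 f3_def by auto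
  have q1: "merge_rel S 3 f1 1 = S i"
  proof -
    have c: "(1 \<le> l \<and> l \<le> 3 \<and> f1 l = 1) \<longleftrightarrow> l = i" for l using i by (auto simp: f1_def)
    have "{S l | l. 1 \<le> l \<and> l \<le> 3 \<and> f1 l = 1} = {S i}" unfolding c by blast
    thus ?thesis unfolding merge1 by simp
  qed
  have q2: "merge_rel S 3 f2 1 = S 3"
  proof -
    have c: "(1 \<le> l \<and> l \<le> 3 \<and> f2 l = 1) \<longleftrightarrow> l = 3" for l by (auto simp: f2_def)
    have "{S l | l. 1 \<le> l \<and> l \<le> 3 \<and> f2 l = 1} = {S 3}" unfolding c by blast
    thus ?thesis unfolding merge1 by simp
  qed
  have q3: "merge_rel S 3 f3 1 = S i \<union> S 3"
  proof -
    have c: "(1 \<le> l \<and> l \<le> 3 \<and> f3 l = 1) \<longleftrightarrow> l = i \<or> l = 3" for l using i by (auto simp: f3_def)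
    have "{S l | l. 1 \<le> l \<and> l \<le> 3 \<and> f3 l = 1} = {S i, S 3}" unfolding c by blast
    thus ?thesis unfolding merge1 by auto
  qed
  have disj3: "(u, v) \<in> S i \<Longrightarrow> (u, v) \<in> S 3 \<Longrightarrow> False" for u v
    using s3.disj[of i 3 u v] i3 by auto
  have adjG: "adj_mat n (S i \<union> S 3) = At i + At 3"
    by (rule mat_eqI_n[where n = n]) (auto simp: At_def dest: disj3)
  have A10: "adj_mat n (merge_rel S 3 f1 1) * Et 0 = kv i \<cdot>\<^sub>m Et 0"
    using q1 th_eq[OF i3(1), of 0] by (simp add: At_def th_def)
  have A1m: "adj_mat n (merge_rel S 3 f1 1) * Et m = kv i \<cdot>\<^sub>m Et m"
    using q1 th_eq[OF i3(1) m3] ti by (simp add: At_def)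
  have A30: "adj_mat n (merge_rel S 3 f2 1) * Et 0 = kv 3 \<cdot>\<^sub>m Et 0"
    using q2 th_eq[of 3 0] by (simp add: At_def th_def)
  have A3m: "adj_mat n (merge_rel S 3 f2 1) * Et m = kv 3 \<cdot>\<^sub>m Et m"
    using q2 th_eq[of 3 m] m3 t3 by (simp add: At_def)
  have tr1: "(x, z) \<in> S i" if "(x, y) \<in> S i" "(y, z) \<in> S i" "x \<noteq> z" for x y z
    using srg_apply[OF f1i m A10 A1m, unfolded q1, OF that] .
  have tr3: "(x, z) \<in> S 3" if "(x, y) \<in> S 3" "(y, z) \<in> S 3" "x \<noteq> z" for x y z
    using srg_apply[OF f2i m A30 A3m, unfolded q2, OF that] .
  have G0: "adj_mat n (S i \<union> S 3) * Et 0 = (kv i + kv 3) \<cdot>\<^sub>m Et 0"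
    using adjG add_mult_distrib_mat[OF At_carrier At_carrier s3.E_carrier[of 0]]
      th_eq[OF i3(1), of 0] th_eq[of 3 0] add_smult_distrib_right_mat[OF s3.E_carrier[of 0]]
    unfolding th_def by simp
  have Gm: "adj_mat n (S i \<union> S 3) * Et m = (kv i + kv 3) \<cdot>\<^sub>m Et m"
    using adjG add_mult_distrib_mat[OF At_carrier At_carrier s3.E_carrier[OF m3]]
      th_eq[OF i3(1) m3] th_eq[of 3 m] m3 ti t3 add_smult_distrib_right_mat[OF s3.E_carrier[OF m3]]
    by simp
  have trG: "(x, z) \<in> S i \<union> S 3" if "(x, y) \<in> S i \<union> S 3" "(y, z) \<in> S i \<union> S 3" "x \<noteq> z" for x y z
    using srg_apply[OF f3i m G0[folded q3] Gm[folded q3], unfolded q3, OF that] .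
  obtain x y where xy: "(x, y) \<in> S i" using s3.rel_ne[OF i3(2)] by auto
  have xyn: "x < n" "y < n" using s3.rel_sub[OF i3(2) xy] by auto
  obtain a b where ab: "(a, b) \<in> S 3" using s3.rel_ne[of 3] by auto
  have abn: "a < n" "b < n" using s3.rel_sub[OF _ ab] by auto
  have ca: "card {z. z < n \<and> (a, z) \<in> S 3} > 0"
  proof -
    have "b \<in> {z. z < n \<and> (a, z) \<in> S 3}" using ab abn by simp
    moreover have "finite {z. z < n \<and> (a, z) \<in> S 3}" by simp
    ultimately show ?thesis using card_gt_0_iff by blast
  qed
  have "of_nat (card {z. z < n \<and> (y, z) \<in> S 3}) = (of_nat (card {z. z < n \<and> (a, z) \<in> S 3}) :: complex)"
    using rowsum[of 3 y] rowsum[of 3 a] xyn abn ind_sum_card[where n = n and P = "\<lambda>z. (y, z) \<in> S 3"]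
      ind_sum_card[where n = n and P = "\<lambda>z. (a, z) \<in> S 3"] by simp
  hence "card {z. z < n \<and> (y, z) \<in> S 3} > 0" using ca by (simp only: of_nat_eq_iff)
  hence "{z. z < n \<and> (y, z) \<in> S 3} \<noteq> {}" using card_gt_0_iff by blast
  then obtain z where yz: "(y, z) \<in> S 3" by blast
  have nodiag: "(u, u) \<notin> S q" if "q \<in> {1,2,3}" "u < n" for u q
  proof
    assume "(u, u) \<in> S q"
    moreover have "(u, u) \<in> S 0" using s3.R0 that(2) by auto
    ultimately show False using s3.disj[of q 0 u u] that by auto
  qed
  have symi: "(v, u) \<in> S i" if "(u, v) \<in> S i" for u v using S_sym[OF i3(2)] that by auto
  have sym3': "(v, u) \<in> S 3" if "(u, v) \<in> S 3" for u v using S_sym[of 3] that by auto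
  have zn: "z < n" using s3.rel_sub[OF _ yz] by auto
  have xz: "x \<noteq> z"
  proof
    assume "x = z"
    hence "(y, x) \<in> S 3" using yz by simp
    moreover have "(y, x) \<in> S i" using symi[OF xy] .
    ultimately show False using disj3 by blast
  qed
  have yzne: "y \<noteq> z" using nodiag[of 3 y] yz xyn by auto
  have xyne: "x \<noteq> y" using nodiag[of i x] xy xyn i3 by auto
  have "(x, z) \<in> S i \<union> S 3" using trG[of x y z] xy yz xz by blast
  thus False
  proof
    assume "(x, z) \<in> S i"
    hence "(y, z) \<in> S i" using tr1[OF symi[OF xy]] yzne by blast
    thus False using yz disj3 by blast
  next
    assume "(x, z) \<in> S 3"
    hence "(x, y) \<in> S 3" using tr3[OF _ sym3'[OF yz]] xyne by blast
    thus False using xy disj3 by blast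
  qed
qed

end

context setting2 begin

definition fm :: "nat \<Rightarrow> nat" where
  "fm j = (if j = j0 then 0 else if j = j1 then 1 else if j = j2 then 2 else 3)"

lemma fm: assumes j: "j \<le> 4" shows "fm j \<le> 3" "T (fm j) j = 1"
proof -
  have "j = j0 \<or> j = j1 \<or> j = j2 \<or> j = k \<or> j = l" using in5[OF j] .
  thus "fm j \<le> 3" "T (fm j) j = 1" unfolding fm_def using dist' Tj0 Tj1 Tj2 Tk Tl by auto
qed

lemma fm_vals: "fm j0 = 0" "fm j1 = 1" "fm j2 = 2" "fm k = 3" "fm l = 3"
  unfolding fm_def using dist' by auto

lemma final:
  assumes i: "i \<in> {1,2}"
  shows "card (Collect (eigenvalue (adj_mat n (R i \<union> R 3)))) = 5"
proof -
  have i3: "i \<in> {1,2,3}" "i \<le> 4" "i \<le> 3" "i \<noteq> 3" using i by auto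
  let ?M = "adj_mat n (R i \<union> R 3)"
  have disj: "(u, v) \<in> R i \<Longrightarrow> (u, v) \<in> R 3 \<Longrightarrow> False" for u v
    using s4.disj[of i 3 u v] i3 by auto
  have MA: "?M = A i + A 3"
    by (rule mat_eqI_n[where n = n]) (auto simp: A_def dest: disj)
  have Mc: "?M \<in> carrier_mat n n" by simp
  have MBM: "?M \<in> s4.BM" unfolding MA using s4.BM_add[OF A_BM[OF i3(2)] A_BM[of 3]] by simp
  have Ai: "A i = At i" using At12 i by auto
  define lam where "lam j = th i (fm j) + al j" for j
  have ME: "?M * E j = lam j \<cdot>\<^sub>m E j" if j: "j \<le> 4" for j
  proof -
    have "?M * E j = A i * E j + A 3 * E j"
      unfolding MA using add_mult_distrib_mat[OF A_carrier A_carrier s4.E_carrier[OF j]] .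
    also have "\<dots> = th i (fm j) \<cdot>\<^sub>m E j + al j \<cdot>\<^sub>m E j"
      using AtE[OF i3(1) fm(1)[OF j] j fm(2)[OF j]] al_eq[OF j] Ai by simp
    also have "\<dots> = lam j \<cdot>\<^sub>m E j"
      unfolding lam_def using add_smult_distrib_right_mat[OF s4.E_carrier[OF j]] by simp
    finally show ?thesis .
  qed
  have ev: "Collect (eigenvalue ?M) = lam ` {..4}"
  proof
    show "lam ` {..4} \<subseteq> Collect (eigenvalue ?M)"
      using eigenvalue_from_mat[OF Mc s4.E_carrier s4.E_nz ME] by auto
    show "Collect (eigenvalue ?M) \<subseteq> lam ` {..4}"
    proof
      fix mu assume "mu \<in> Collect (eigenvalue ?M)"
      hence "eigenvalue ?M mu" by simp
      from eig_in_set[OF Mc this, of 4 E lam] s4.E_carrier s4.E_sum ME s4.BM_comm[OF s4.E_BM MBM]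
      show "mu \<in> lam ` {..4}" by auto
    qed
  qed
  have img: "lam ` {..4} = {lam j0, lam j1, lam j2, lam k, lam l}" unfolding all5 by simp
  have jjv: "jj 0 = j0" "jj 1 = j1" "jj 2 = j2" unfolding jj_def by auto
  have alj: "al j0 = th 3 0 / 2" "al j1 = th 3 1 / 2" "al j2 = th 3 2 / 2"
    using al_jj[of 0] al_jj[of 1] al_jj[of 2] jjv by auto
  have l0: "lam j0 = th i 0 + th 3 0 / 2" and l1: "lam j1 = th i 1 + th 3 1 / 2"
    and l2: "lam j2 = th i 2 + th 3 2 / 2" and lk: "lam k = th i 3 + al k" and ll: "lam l = th i 3 + al l"
    unfolding lam_def using fm_vals alj by auto
  have re: "Im (th a m) = 0" if "a \<in> {1,2,3}" "m \<le> 3" for a m using th_real that by blast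
  have im_j: "Im (lam j0) = 0" "Im (lam j1) = 0" "Im (lam j2) = 0"
    unfolding l0 l1 l2 using re[OF i3(1)] re[of 3] by auto
  have im_k: "Im (lam k) \<noteq> 0" "Im (lam l) \<noteq> 0"
    unfolding lk ll using re[OF i3(1), of 3] Im_al by auto
  have kl: "lam k \<noteq> lam l" unfolding lk ll using al_ne by simp
  have t12: "th 3 1 = th 3 2" unfolding th_def by simp
  have i12: "th i 1 \<noteq> th i 2" using ab_ne[OF i3(1)] i unfolding th_def by auto
  have d12: "lam j1 \<noteq> lam j2" unfolding l1 l2 using t12 i12 by simp
  have d0: "lam j0 \<noteq> lam jm" if m: "m \<in> {1,2}" and jm: "lam jm = th i m + th 3 m / 2" for m jm
  proof
    assume eq: "lam j0 = lam jm"
    have m3: "m \<le> 3" using m by auto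
    have kvi: "th i 0 = of_real (real (valency n (S i)))" "th 3 0 = of_real (real (valency n (S 3)))"
      unfolding th_def kv_def by simp_all
    have "Re (lam j0) = Re (lam jm)" using eq by simp
    hence "real (valency n (S i)) + real (valency n (S 3)) / 2 = Re (th i m) + Re (th 3 m) / 2"
      unfolding l0 jm using kvi by simp
    moreover have "Re (th i m) \<le> real (valency n (S i))" using th_bound[OF i3(1) m3] .
    moreover have "Re (th 3 m) \<le> real (valency n (S 3))" using th_bound[of 3 m] m3 by simp
    ultimately have r1: "Re (th i m) = real (valency n (S i))" and r3: "Re (th 3 m) = real (valency n (S 3))"
      by linarith+
    have "th i m = kv i" using r1 re[OF i3(1) m3] unfolding kv_def by (simp add: complex_eq_iff)
    moreover have "th 3 m = kv 3" using r3 re[of 3 m] m3 unfolding kv_def by (simp add: complex_eq_iff)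
    ultimately show False using no_double[OF i m] by blast
  qed
  have d01: "lam j0 \<noteq> lam j1" using d0[of 1 j1] l1 by simp
  have d02: "lam j0 \<noteq> lam j2" using d0[of 2 j2] l2 by simp
  have nr: "lam a \<noteq> lam b" if "Im (lam a) = 0" "Im (lam b) \<noteq> 0" for a b using that by auto
  have "card {lam j0, lam j1, lam j2, lam k, lam l} = 5"
    using d01 d02 d12 kl nr[OF im_j(1) im_k(1)] nr[OF im_j(1) im_k(2)] nr[OF im_j(2) im_k(1)]
      nr[OF im_j(2) im_k(2)] nr[OF im_j(3) im_k(1)] nr[OF im_j(3) im_k(2)]
    by simp
  thus ?thesis unfolding ev img .
qed

end

lemma (in setting) main: "\<forall>i\<in>{1,2}. card (Collect (eigenvalue (adj_mat n (R i \<union> R 3)))) = 5"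
proof -
  obtain j0 j1 j2 k l where st: "{..4} = {j0, j1, j2, k, l}" "distinct [j0, j1, j2, k, l]"
     "T 0 j0 = 1" "T 1 j1 = 1" "T 2 j2 = 1" "T 3 k = 1" "T 3 l = 1"
    using struct5 by blast
  interpret s2: setting2 n R E Et j0 j1 j2 k l
    by (unfold_locales) (use st in auto)
  show ?thesis using s2.final by blast
qed

theorem proposition3p7:
  fixes n :: nat and R :: "nat \<Rightarrow> (nat \<times> nat) set"
    and E Et :: "nat \<Rightarrow> complex mat"
  assumes comm: "commutative_scheme n 4 R"
    and tr34: "(R 3)\<inverse> = R 4"
    and sym012: "\<forall>i\<le>2. (R i)\<inverse> = R i"
    and E: "prim_idempotents n 4 R E"
    and amor: "amorphic n 3 (symmetrization R)"
    and Et: "prim_idempotents n 3 (symmetrization R) Et"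
    and numbering: "\<forall>i\<in>{1,2,3}. \<exists>a b :: complex. a \<noteq> b \<and>
        adj_mat n (symmetrization R i) * Et 0
          = of_nat (valency n (symmetrization R i)) \<cdot>\<^sub>m Et 0 \<and>
        adj_mat n (symmetrization R i) * Et i = b \<cdot>\<^sub>m Et i \<and>
        (\<forall>j\<in>{1,2,3}. j \<noteq> i \<longrightarrow> adj_mat n (symmetrization R i) * Et j = a \<cdot>\<^sub>m Et j)"
    and notin: "Et 3 \<notin> {E 1, E 2, E 3, E 4}"
  shows "\<forall>i\<in>{1,2}. card (Collect (eigenvalue (adj_mat n (R i \<union> R 3)))) = 5"
proof -
  interpret setting n R E Et
    by (unfold_locales) (rule comm, rule tr34, rule sym012, rule E, rule amor, rule Et, rule numbering, rule notin)
  show ?thesis by (rule main)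
qed

end
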